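(* For every subsemigroup $D$ of $(\mathbb{N}_0,+)$, the set $\mathcal I_D$ is a category of partitions.
   Context: A (two-colored) partition $p$ consists of two finite totally ordered sets $U$ (upper row, ordered left to right) and $L$ (lower row), a decomposition of the disjoint union $U\sqcup L$ (the points of $p$) into non-empty pairwise disjoint subsets (blocks), and a coloring of every point by white $\circ$ or black $\bullet$. A pair partition is one all of whose blocks have exactly two points. Operations: the tensor product $p\otimes p'$ appends each row of $p'$ to the right of the corresponding row of $p$; the involution $p^*$ exchanges upper and lower row; if the lower row of $p'$ and the upper row of $p$ agree in length and coloring, the composition $pp'$ is obtained by placing $p'$ on top of $p$, identifying the lower row of $p'$ with the upper row of $p$, taking the upper row of $p'$ as upper row and the lower row of $p$ as lower row, and declaring two remaining points to lie in the same block iff they are connected through blocks of $p$ and $p'$ via the identified middle points (components lying entirely in the middle are discarded). A category of partitions is a set of partitions closed under tensor products, compositions (whenever defined) and involution, and containing the two partitions with one upper and one lower point, both of the same color $c\in\{\circ,\bullet\}$, forming one block, and the two partitions with empty upper row and lower row $\circ\bullet$ resp. $\bullet\circ$ whose two points form one block. Cyclic order and color sum: on the points of $p$ consider the cyclic order obtained by traversing the lower row from left to right, then the upper row from right to left, then returning to the leftmost lower point. For points $\alpha,\beta$, $]\alpha,\beta[$ denotes the set of points strictly after $\alpha$ and strictly before $\beta$ in this cyclic order, and $]\alpha,\beta]:=]\alpha,\beta[\cup\{\beta\}$ if $\alpha\ne\beta$, $]\alpha,\alpha]:=\emptyset$. The normalized color of a lower point is its color, that of an upper point the opposite color. For a set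 $S$ of points, $\sigma_p(S)$ is the number of points of normalized color $\circ$ in $S$ minus the number of points of normalized color $\bullet$ in $S$. Two distinct blocks $B,B'$ cross if there are points $\alpha,\beta\in B$, $\gamma,\delta\in B'$ occurring in the cyclic order in the order $\alpha,\gamma,\beta,\delta$. $\mathcal P^{\circ\bullet}_{2,\mathrm{nb}}$ is the set of pair partitions each of whose blocks contains one point of normalized color $\circ$ and one of normalized color $\bullet$. $\mathcal S_0$ is the set of $p\in\mathcal P^{\circ\bullet}_{2,\mathrm{nb}}$ such that $\sigma_p(]\alpha,\beta[)=0$ for every block $\{\alpha,\beta\}$ of $p$. For $p\in\mathcal S_0$ and points $\alpha,\beta$ put $\delta_p(\alpha,\beta)=\sigma_p(]\alpha,\beta[)$ if $\alpha,\beta$ have different normalized colors and $\delta_p(\alpha,\beta)=\sigma_p(]\alpha,\beta])$ otherwise; for blocks $B,B'$ of $p\in\mathcal S_0$ the value $\delta_p(\alpha,\alpha')$ is independent of the choice $\alpha\in B,\alpha'\in B'$, and $d_p(B,B'):=|\delta_p(\alpha,\alpha')|$. A subsemigroup of $(\mathbb N_0,+)$ is a (possibly empty) subset closed under addition. For such $D$, $\mathcal I_D$ is the set of all $p\in\mathcal S_0$ such that $d_p(B,B')\notin D$ for all pairs of crossing blocks $B,B'$ of $p$. *)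

theory Defs
  imports "HOL-Library.Disjoint_Sets"
begin

text \<open>Colors: W = white (circ), B = black (bullet).\<close>
datatype color = W | B

fun opp :: "color \<Rightarrow> color" where
  "opp W = B" | "opp B = W"

text \<open>Points: Up i is the i-th upper point (0-based, left to right),
  Lo j the j-th lower point.\<close>
datatype pt = Up nat | Lo nat

record ptn =
  ucol :: "color list"
  lcol :: "color list"
  blocks :: "pt set set"

definition points :: "ptn \<Rightarrow> pt set" where
  "points p = {Up i | i. i < length (ucol p)} \<union> {Lo j | j. j < length (lcol p)}"

definition is_partition :: "ptn \<Rightarrow> bool" where
  "is_partition p \<longleftrightarrow> partition_on (points p) (blocks p)"

definition is_pair_partition :: "ptn \<Rightarrow> bool" where
  "is_pair_partition p \<longleftrightarrow> is_partition p \<and> (\<forall>K\<in>blocks p. card K = 2)"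

fun shift :: "nat \<Rightarrow> nat \<Rightarrow> pt \<Rightarrow> pt" where
  "shift k l (Up i) = Up (i + k)"
| "shift k l (Lo j) = Lo (j + l)"

definition tensor :: "ptn \<Rightarrow> ptn \<Rightarrow> ptn" where
  "tensor p q = \<lparr> ucol = ucol p @ ucol q, lcol = lcol p @ lcol q,
     blocks = blocks p \<union> (image (shift (length (ucol p)) (length (lcol p)))) ` blocks q \<rparr>"

fun swap_pt :: "pt \<Rightarrow> pt" where
  "swap_pt (Up i) = Lo i"
| "swap_pt (Lo j) = Up j"

definition invol :: "ptn \<Rightarrow> ptn" where
  "invol p = \<lparr> ucol = lcol p, lcol = ucol p, blocks = (image swap_pt) ` blocks p \<rparr>"

text \<open>Composition p q (written p p' in the paper, with q = p' placed on top of p):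
  points of the stacked picture are T i (upper row of q), M j (the identified middle
  row = lower row of q = upper row of p), Bt j (lower row of p).\<close>
datatype cpt = T nat | M nat | Bt nat

fun top_emb :: "pt \<Rightarrow> cpt" where
  "top_emb (Up i) = T i"
| "top_emb (Lo j) = M j"

fun bot_emb :: "pt \<Rightarrow> cpt" where
  "bot_emb (Up i) = M i"
| "bot_emb (Lo j) = Bt j"

fun from_outer :: "cpt \<Rightarrow> pt" where
  "from_outer (T i) = Up i"
| "from_outer (Bt j) = Lo j"
| "from_outer (M j) = Up j" (* never used: middle points are discarded *)

definition comp_rel :: "ptn \<Rightarrow> ptn \<Rightarrow> (cpt \<times> cpt) set" where
  "comp_rel p q =
     {(top_emb x, top_emb y) | x y. \<exists>K\<in>blocks q. x \<in> K \<and> y \<in> K}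
   \<union> {(bot_emb x, bot_emb y) | x y. \<exists>K\<in>blocks p. x \<in> K \<and> y \<in> K}"

definition outer_pts :: "ptn \<Rightarrow> ptn \<Rightarrow> cpt set" where
  "outer_pts p q = {T i | i. i < length (ucol q)} \<union> {Bt j | j. j < length (lcol p)}"

definition comp :: "ptn \<Rightarrow> ptn \<Rightarrow> ptn" where
  "comp p q = \<lparr> ucol = ucol q, lcol = lcol p,
     blocks = {from_outer ` ({y. (x, y) \<in> (comp_rel p q)\<^sup>*} \<inter> outer_pts p q) | x. x \<in> outer_pts p q} \<rparr>"

definition id_part :: "color \<Rightarrow> ptn" where
  "id_part c = \<lparr> ucol = [c], lcol = [c], blocks = {{Up 0, Lo 0}} \<rparr>"

definition pair_part :: "color \<Rightarrow> color \<Rightarrow> ptn" where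
  "pair_part c d = \<lparr> ucol = [], lcol = [c, d], blocks = {{Lo 0, Lo 1}} \<rparr>"

definition category_of_partitions :: "ptn set \<Rightarrow> bool" where
  "category_of_partitions C \<longleftrightarrow>
     (\<forall>p\<in>C. is_partition p)
   \<and> (\<forall>p\<in>C. \<forall>q\<in>C. tensor p q \<in> C)
   \<and> (\<forall>p\<in>C. \<forall>q\<in>C. lcol q = ucol p \<longrightarrow> comp p q \<in> C)
   \<and> (\<forall>p\<in>C. invol p \<in> C)
   \<and> id_part W \<in> C \<and> id_part B \<in> C
   \<and> pair_part W B \<in> C \<and> pair_part B W \<in> C"

text \<open>Position in the cyclic order: lower row left to right, then upper row right to left.\<close>
fun pos :: "ptn \<Rightarrow> pt \<Rightarrow> nat" where
  "pos p (Lo j) = j"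
| "pos p (Up i) = length (lcol p) + (length (ucol p) - 1 - i)"

definition cyc_between :: "nat \<Rightarrow> nat \<Rightarrow> nat \<Rightarrow> bool" where
  "cyc_between a b c \<longleftrightarrow> (if a < b then a < c \<and> c < b else a < c \<or> c < b)"

definition oi :: "ptn \<Rightarrow> pt \<Rightarrow> pt \<Rightarrow> pt set" where
  "oi p a b = {c \<in> points p. cyc_between (pos p a) (pos p b) (pos p c)}"

definition hoi :: "ptn \<Rightarrow> pt \<Rightarrow> pt \<Rightarrow> pt set" where
  "hoi p a b = (if a = b then {} else oi p a b \<union> {b})"

fun ncol :: "ptn \<Rightarrow> pt \<Rightarrow> color" where
  "ncol p (Lo j) = lcol p ! j"
| "ncol p (Up i) = opp (ucol p ! i)"

definition sigma :: "ptn \<Rightarrow> pt set \<Rightarrow> int" where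
  "sigma p S = int (card {x \<in> S. ncol p x = W}) - int (card {x \<in> S. ncol p x = B})"

definition crossing :: "ptn \<Rightarrow> pt set \<Rightarrow> pt set \<Rightarrow> bool" where
  "crossing p K K' \<longleftrightarrow> K \<noteq> K' \<and>
     (\<exists>a b c d. a \<in> K \<and> b \<in> K \<and> c \<in> K' \<and> d \<in> K' \<and> a \<noteq> b
        \<and> c \<in> oi p a b \<and> d \<in> oi p b a)"

definition P2nb :: "ptn set" where
  "P2nb = {p. is_pair_partition p \<and>
     (\<forall>K\<in>blocks p. \<exists>a\<in>K. \<exists>b\<in>K. ncol p a = W \<and> ncol p b = B)}"

definition S0 :: "ptn set" where
  "S0 = {p \<in> P2nb. \<forall>K\<in>blocks p. \<forall>a\<in>K. \<forall>b\<in>K. a \<noteq> b \<longrightarrow> sigma p (oi p a b) = 0}"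

definition delta :: "ptn \<Rightarrow> pt \<Rightarrow> pt \<Rightarrow> int" where
  "delta p a b = (if ncol p a \<noteq> ncol p b then sigma p (oi p a b) else sigma p (hoi p a b))"

text \<open>d_p(K,K') = |delta_p(a,a')| for (any, here a chosen) a in K, a' in K'.\<close>
definition dist_bl :: "ptn \<Rightarrow> pt set \<Rightarrow> pt set \<Rightarrow> nat" where
  "dist_bl p K K' = nat \<bar>delta p (SOME a. a \<in> K) (SOME a'. a' \<in> K')\<bar>"

definition subsemigroup :: "nat set \<Rightarrow> bool" where
  "subsemigroup D \<longleftrightarrow> (\<forall>a\<in>D. \<forall>b\<in>D. a + b \<in> D)"

definition I_D :: "nat set \<Rightarrow> ptn set" where
  "I_D D = {p \<in> S0. \<forall>K\<in>blocks p. \<forall>K'\<in>blocks p. crossing p K K' \<longrightarrow> dist_bl p K K' \<notin> D}"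

end

theory Submission
  imports Defs
begin

fun col :: "color \<Rightarrow> int" where "col W = 1" | "col B = -1"

definition cs :: "color list \<Rightarrow> int" where "cs xs = sum_list (map col xs)"

definition lv :: "color list \<Rightarrow> nat \<Rightarrow> int" where
  "lv xs j = cs (take j xs) + (if xs ! j = W then 0 else -1)"

fun lev :: "ptn \<Rightarrow> pt \<Rightarrow> int" where
  "lev p (Lo j) = lv (lcol p) j"
| "lev p (Up i) = lv (ucol p) i"

definition cyc :: "ptn \<Rightarrow> color list" where
  "cyc p = lcol p @ map opp (rev (ucol p))"

lemma col_opp[simp]: "col (opp c) = - col c" by (cases c) auto
lemma opp_opp[simp]: "opp (opp c) = c" by (cases c) auto
lemma cs_append[simp]: "cs (xs @ ys) = cs xs + cs ys" by (simp add: cs_def)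
lemma cs_rev[simp]: "cs (rev xs) = cs xs" by (simp add: cs_def sum_list_rev flip: rev_map)
lemma cs_map_opp[simp]: "cs (map opp xs) = - cs xs"
  by (induction xs) (auto simp: cs_def)
lemma cs_Nil[simp]: "cs [] = 0" by (simp add: cs_def)
lemma cs_Cons[simp]: "cs (x # xs) = col x + cs xs" by (simp add: cs_def)

lemma finite_points[simp]: "finite (points p)"
  unfolding points_def by auto

lemma length_cyc: "length (cyc p) = length (lcol p) + length (ucol p)"
  by (simp add: cyc_def)

lemma pos_lt: "x \<in> points p \<Longrightarrow> pos p x < length (cyc p)"
  by (auto simp: points_def length_cyc)

lemma cyc_pos: "x \<in> points p \<Longrightarrow> cyc p ! pos p x = ncol p x"
  by (auto simp: points_def cyc_def nth_append rev_nth)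

lemma inj_pos: "inj_on (pos p) (points p)"
  by (auto simp: inj_on_def points_def)

lemma pos_image: "pos p ` points p = {..<length (cyc p)}"
proof -
  have "k \<in> pos p ` points p" if "k < length (cyc p)" for k
  proof (cases "k < length (lcol p)")
    case True then show ?thesis by (force simp: points_def)
  next
    case False
    let ?i = "length (ucol p) - 1 - (k - length (lcol p))"
    have "pos p (Up ?i) = k" "Up ?i \<in> points p" using False that by (auto simp: length_cyc points_def)
    then show ?thesis by (metis imageI)
  qed
  then show ?thesis using pos_lt by auto
qed

lemma col_split: "col c = of_bool (c = W) - of_bool (c = B)" by (cases c) auto

lemma sigma_sum: "finite S \<Longrightarrow> sigma p S = (\<Sum>x\<in>S. col (ncol p x))"
  by (simp add: sigma_def col_split sum_subtractf Int_def)

definition Hs :: "ptn \<Rightarrow> nat \<Rightarrow> int" where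
  "Hs p j = (\<Sum>k<j. col (cyc p ! k))"

lemma sum_take: "j \<le> length xs \<Longrightarrow> (\<Sum>k<j. col (xs ! k)) = cs (take j xs)"
proof (induction j)
  case 0 then show ?case by simp
next
  case (Suc j)
  then have "take (Suc j) xs = take j xs @ [xs ! j]" by (simp add: take_Suc_conv_app_nth)
  then show ?case using Suc by simp
qed

lemma sigma_pos: "S \<subseteq> points p \<Longrightarrow> sigma p S = (\<Sum>k\<in>pos p ` S. col (cyc p ! k))"
proof -
  assume S: "S \<subseteq> points p"
  then have fS: "finite S" using finite_subset[OF _ finite_points] by auto
  have inj: "inj_on (pos p) S" using inj_pos S by (rule inj_on_subset)
  have "(\<Sum>k\<in>pos p ` S. col (cyc p ! k)) = (\<Sum>x\<in>S. col (cyc p ! pos p x))"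
    using sum.reindex[OF inj] by simp
  also have "\<dots> = (\<Sum>x\<in>S. col (ncol p x))" using S cyc_pos by (intro sum.cong) auto
  finally show ?thesis using sigma_sum[OF fS] by simp
qed

definition balanced :: "ptn \<Rightarrow> bool" where
  "balanced p \<longleftrightarrow> cs (lcol p) = cs (ucol p)"

lemma oi_sub: "oi p a b \<subseteq> points p" by (auto simp: oi_def)

lemma pos_oi: "pos p ` oi p a b = {k. k < length (cyc p) \<and> cyc_between (pos p a) (pos p b) k}"
proof -
  have "pos p ` oi p a b = {k \<in> pos p ` points p. cyc_between (pos p a) (pos p b) k}"
    unfolding oi_def by blast
  then show ?thesis using pos_image by simp
qed

lemma Hs_ivl: "i \<le> j \<Longrightarrow> (\<Sum>k\<in>{i..<j}. col (cyc p ! k)) = Hs p j - Hs p i"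
  unfolding Hs_def lessThan_atLeast0 by (simp add: sum_diff_nat_ivl)

lemma Hs_suc: "Hs p (Suc j) = Hs p j + col (cyc p ! j)" by (simp add: Hs_def)

lemma Hs_total: "balanced p \<Longrightarrow> Hs p (length (cyc p)) = 0"
  by (simp add: Hs_def sum_take balanced_def cyc_def)

lemma sig_oi:
  assumes bal: "balanced p" and a: "a \<in> points p" and b: "b \<in> points p" and ab: "a \<noteq> b"
  shows "sigma p (oi p a b) = Hs p (pos p b) - Hs p (pos p a) - col (ncol p a)"
proof -
  let ?N = "length (cyc p)" and ?a = "pos p a" and ?b = "pos p b"
  have ne: "?a \<noteq> ?b" using inj_pos a b ab by (metis inj_on_def)
  have aN: "?a < ?N" and bN: "?b < ?N" using a b pos_lt by auto
  have s: "sigma p (oi p a b) = (\<Sum>k\<in>{k. k < ?N \<and> cyc_between ?a ?b k}. col (cyc p ! k))"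
    using sigma_pos[OF oi_sub] pos_oi by metis
  have ca: "col (ncol p a) = col (cyc p ! ?a)" using cyc_pos a by simp
  show ?thesis
  proof (cases "?a < ?b")
    case True
    then have "{k. k < ?N \<and> cyc_between ?a ?b k} = {Suc ?a..<?b}" using bN by (auto simp: cyc_between_def)
    moreover have "(\<Sum>k\<in>{Suc ?a..<?b}. col (cyc p ! k)) = Hs p ?b - Hs p (Suc ?a)"
      using True by (intro Hs_ivl) simp
    ultimately show ?thesis using s ca Hs_suc by simp
  next
    case False
    then have lt: "?b < ?a" using ne by simp
    then have "{k. k < ?N \<and> cyc_between ?a ?b k} = {..<?b} \<union> {Suc ?a..<?N}" using aN by (auto simp: cyc_between_def)
    moreover have "(\<Sum>k\<in>{..<?b} \<union> {Suc ?a..<?N}. col (cyc p ! k)) = Hs p ?b + (Hs p ?N - Hs p (Suc ?a))"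
    proof -
      have "(\<Sum>k\<in>{..<?b} \<union> {Suc ?a..<?N}. col (cyc p ! k)) = (\<Sum>k\<in>{..<?b}. col (cyc p ! k)) + (\<Sum>k\<in>{Suc ?a..<?N}. col (cyc p ! k))"
        using lt by (intro sum.union_disjoint) auto
      moreover have "(\<Sum>k\<in>{Suc ?a..<?N}. col (cyc p ! k)) = Hs p ?N - Hs p (Suc ?a)"
        using aN by (intro Hs_ivl) simp
      ultimately show ?thesis by (simp add: Hs_def)
    qed
    ultimately show ?thesis using s ca Hs_suc Hs_total[OF bal] by simp
  qed
qed

lemma adjW: "(if c = W then (0::int) else -1) = (if opp c = W then 0 else -1) + col c - 0 - col c + (if c = W then 0 else -1) - (if opp c = W then 0 else -1)"
  by simp

lemma lev_Hs:
  assumes bal: "balanced p" and x: "x \<in> points p"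
  shows "lev p x = Hs p (pos p x) + (if ncol p x = W then 0 else -1)"
proof -
  have H: "Hs p (pos p x) = cs (take (pos p x) (cyc p))"
    unfolding Hs_def using pos_lt[OF x] by (intro sum_take) simp
  show ?thesis
  proof (cases x)
    case (Lo j)
    then have j: "j < length (lcol p)" using x by (auto simp: points_def)
    then show ?thesis using H Lo by (simp add: cyc_def lv_def)
  next
    case (Up i)
    let ?u = "ucol p" and ?l = "lcol p"
    have i: "i < length ?u" using x Up by (auto simp: points_def)
    have "take (pos p x) (cyc p) = ?l @ map opp (take (length ?u - 1 - i) (rev ?u))"
      using Up by (simp add: cyc_def take_map)
    also have "take (length ?u - 1 - i) (rev ?u) = rev (drop (Suc i) ?u)"
      using i by (simp add: take_rev)
    finally have "Hs p (pos p x) = cs ?l - cs (drop (Suc i) ?u)" using H by simp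
    also have "\<dots> = cs (take (Suc i) ?u)"
      using bal unfolding balanced_def by (metis append_take_drop_id cs_append add_diff_cancel_right')
    also have "\<dots> = cs (take i ?u) + col (?u ! i)" using i by (simp add: take_Suc_conv_app_nth)
    finally show ?thesis using Up by (cases "?u ! i") (auto simp: lv_def)
  qed
qed

lemma delta_lev:
  assumes bal: "balanced p" and a: "a \<in> points p" and b: "b \<in> points p" and ab: "a \<noteq> b"
  shows "delta p a b = lev p b - lev p a"
proof -
  have s: "sigma p (oi p a b) = Hs p (pos p b) - Hs p (pos p a) - col (ncol p a)"
    by (rule sig_oi[OF assms])
  have la: "lev p a = Hs p (pos p a) + (if ncol p a = W then 0 else -1)" by (rule lev_Hs[OF bal a])
  have lb: "lev p b = Hs p (pos p b) + (if ncol p b = W then 0 else -1)" by (rule lev_Hs[OF bal b])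
  have bn: "b \<notin> oi p a b" by (simp add: oi_def cyc_between_def)
  have fo: "finite (oi p a b)" using oi_sub finite_subset[OF _ finite_points] by blast
  have h: "sigma p (hoi p a b) = sigma p (oi p a b) + col (ncol p b)"
    using ab bn fo by (simp add: hoi_def sigma_sum)
  show ?thesis
    unfolding delta_def using s la lb h
    by (cases "ncol p a"; cases "ncol p b") auto
qed

lemma cross_nat:
  fixes a b c d :: nat
  assumes "a \<noteq> b" "a \<noteq> c" "a \<noteq> d" "b \<noteq> c" "b \<noteq> d" "c \<noteq> d"
  shows "((cyc_between a b c \<and> cyc_between b a d) \<or> (cyc_between a b d \<and> cyc_between b a c))
     \<longleftrightarrow> odd (of_bool (a<c) + of_bool (a<d) + of_bool (b<c) + of_bool (b<d) :: nat)"
  using assms unfolding cyc_between_def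
  by (cases "a < b"; cases "a < c"; cases "a < d"; cases "b < c"; cases "b < d"; cases "c < d") auto

lemma cb_excl: "a \<noteq> b \<Longrightarrow> c \<noteq> a \<Longrightarrow> c \<noteq> b \<Longrightarrow> \<not> (cyc_between a b c \<and> cyc_between b a c)"
  by (auto simp: cyc_between_def)

lemma ex_cross:
  fixes f :: "'a \<Rightarrow> nat"
  assumes "x \<in> {a,b}" "y \<in> {a,b}" "x \<noteq> y" "z \<in> {c,d}" "w \<in> {c,d}"
    "cyc_between (f x) (f y) (f z)" "cyc_between (f y) (f x) (f w)"
    "f a \<noteq> f b" "f a \<noteq> f c" "f a \<noteq> f d" "f b \<noteq> f c" "f b \<noteq> f d" "f c \<noteq> f d"
  shows "(cyc_between (f a) (f b) (f c) \<and> cyc_between (f b) (f a) (f d)) \<or>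
      (cyc_between (f a) (f b) (f d) \<and> cyc_between (f b) (f a) (f c))"
  using assms by (auto simp: cyc_between_def)

definition cc :: "ptn \<Rightarrow> pt set \<Rightarrow> pt set \<Rightarrow> nat" where
  "cc p K K' = (\<Sum>u\<in>K. \<Sum>v\<in>K'. of_bool (pos p u < pos p v))"

definition good :: "ptn \<Rightarrow> bool" where
  "good p \<longleftrightarrow> is_pair_partition p \<and>
     (\<forall>K\<in>blocks p. \<forall>a\<in>K. \<forall>b\<in>K. a \<noteq> b \<longrightarrow> ncol p a \<noteq> ncol p b \<and> lev p a = lev p b)"

lemma pp_block:
  assumes "is_pair_partition p" "K \<in> blocks p"
  shows "K \<subseteq> points p" "card K = 2" "finite K"
  using assms unfolding is_pair_partition_def is_partition_def partition_on_def
  by (auto simp: card_ge_0_finite)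

lemma blocks_disj:
  assumes "is_partition p" "K \<in> blocks p" "K' \<in> blocks p" "K \<noteq> K'"
  shows "K \<inter> K' = {}"
  using assms unfolding is_partition_def partition_on_def disjoint_def by auto

lemma block_of:
  assumes "is_partition p" "x \<in> points p"
  shows "\<exists>K\<in>blocks p. x \<in> K"
  using assms unfolding is_partition_def partition_on_def by auto

lemma card2: "card K = 2 \<Longrightarrow> a \<in> K \<Longrightarrow> \<exists>b. K = {a, b} \<and> a \<noteq> b"
  by (metis card_2_iff insert_commute insertE singletonD)

lemma finite_blocks:
  assumes "is_partition p" shows "finite (blocks p)"
proof -
  have "blocks p \<subseteq> Pow (points p)" using assms unfolding is_partition_def partition_on_def by auto
  then show ?thesis by (rule finite_subset) simp
qed

lemma sum_blocks:
  assumes "is_partition p"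
  shows "(\<Sum>x\<in>points p. f x) = (\<Sum>K\<in>blocks p. \<Sum>x\<in>K. f x)"
proof -
  have U: "\<Union>(blocks p) = points p" using assms unfolding is_partition_def partition_on_def by auto
  have f: "\<forall>A\<in>blocks p. finite A" using U finite_points by (metis Union_upper finite_subset)
  have d: "\<forall>A\<in>blocks p. \<forall>B\<in>blocks p. A \<noteq> B \<longrightarrow> A \<inter> B = {}" using blocks_disj[OF assms] by blast
  have "(\<Sum>x\<in>\<Union>(blocks p). f x) = (\<Sum>K\<in>blocks p. \<Sum>x\<in>K. f x)"
    using sum.Union_disjoint[OF f d] by simp
  then show ?thesis using U by simp
qed

lemma sum_points_cs: "(\<Sum>x\<in>points p. col (ncol p x)) = cs (lcol p) - cs (ucol p)"
proof -
  have "(\<Sum>x\<in>points p. col (ncol p x)) = sigma p (points p)" by (simp add: sigma_sum)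
  also have "\<dots> = (\<Sum>k<length (cyc p). col (cyc p ! k))" using sigma_pos[of "points p" p] pos_image by simp
  also have "\<dots> = cs (cyc p)" by (simp add: sum_take)
  finally show ?thesis by (simp add: cyc_def)
qed

lemma balanced_of:
  assumes pp: "is_pair_partition p"
    and op: "\<forall>K\<in>blocks p. \<forall>a\<in>K. \<forall>b\<in>K. a \<noteq> b \<longrightarrow> ncol p a \<noteq> ncol p b"
  shows "balanced p"
proof -
  have ip: "is_partition p" using pp by (simp add: is_pair_partition_def)
  have "(\<Sum>x\<in>K. col (ncol p x)) = 0" if K: "K \<in> blocks p" for K
  proof -
    obtain a where a: "a \<in> K" using pp_block[OF pp K] by fastforce
    obtain b where b: "K = {a, b}" "a \<noteq> b" using card2[OF pp_block(2)[OF pp K] a] by blast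
    have "ncol p a \<noteq> ncol p b" using op K b by auto
    then show ?thesis using b by (cases "ncol p a"; cases "ncol p b") auto
  qed
  then have "(\<Sum>x\<in>points p. col (ncol p x)) = 0" unfolding sum_blocks[OF ip] by (simp add: sum.neutral)
  then show ?thesis using sum_points_cs by (simp add: balanced_def)
qed

lemma good_balanced: "good p \<Longrightarrow> balanced p"
  unfolding good_def using balanced_of by blast

lemma S0_iff: "p \<in> S0 \<longleftrightarrow> good p"
proof
  assume S: "p \<in> S0"
  then have pp: "is_pair_partition p" by (simp add: S0_def P2nb_def)
  have op: "ncol p a \<noteq> ncol p b" if "K \<in> blocks p" "a \<in> K" "b \<in> K" "a \<noteq> b" for K a b
  proof -
    have "\<exists>x\<in>K. \<exists>y\<in>K. ncol p x = W \<and> ncol p y = B" using S that(1) unfolding S0_def P2nb_def by blast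
    then obtain x y where xy: "x \<in> K" "y \<in> K" "ncol p x = W" "ncol p y = B" by blast
    have "x \<noteq> y" using xy by auto
    then have "K = {x, y}" using card2[OF pp_block(2)[OF pp that(1)] xy(1)] xy(2) by auto
    then show ?thesis using that xy by auto
  qed
  have bal: "balanced p" using balanced_of pp op by blast
  show "good p" unfolding good_def
  proof (rule conjI[OF pp], intro ballI impI)
    fix K a b assume K: "K \<in> blocks p" and a: "a \<in> K" and b: "b \<in> K" and ab: "a \<noteq> b"
    have o: "ncol p a \<noteq> ncol p b" using op K a b ab .
    have pa: "a \<in> points p" "b \<in> points p" using pp_block(1)[OF pp K] a b by auto
    have "sigma p (oi p a b) = 0" using S K a b ab by (auto simp: S0_def)
    then have "delta p a b = 0" using o by (simp add: delta_def)
    then show "ncol p a \<noteq> ncol p b \<and> lev p a = lev p b" using delta_lev[OF bal pa ab] o by simp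
  qed
next
  assume g: "good p"
  then have pp: "is_pair_partition p" by (simp add: good_def)
  have bal: "balanced p" using good_balanced g .
  have P: "p \<in> P2nb" unfolding P2nb_def
  proof (intro CollectI conjI pp ballI)
    fix K assume K: "K \<in> blocks p"
    obtain a where a: "a \<in> K" using pp_block[OF pp K] by fastforce
    obtain b where b: "K = {a, b}" "a \<noteq> b" using card2[OF pp_block(2)[OF pp K] a] by blast
    have "ncol p a \<noteq> ncol p b" using g K b by (auto simp: good_def)
    then show "\<exists>a\<in>K. \<exists>b\<in>K. ncol p a = W \<and> ncol p b = B" using b
      by (cases "ncol p a"; cases "ncol p b") auto
  qed
  show "p \<in> S0" unfolding S0_def
  proof (intro CollectI conjI P ballI impI)
    fix K a b assume K: "K \<in> blocks p" and a: "a \<in> K" and b: "b \<in> K" and ab: "a \<noteq> b"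
    have pa: "a \<in> points p" "b \<in> points p" using pp_block(1)[OF pp K] a b by auto
    have "ncol p a \<noteq> ncol p b" "lev p a = lev p b" using g K a b ab unfolding good_def by blast+
    then show "sigma p (oi p a b) = 0" using delta_lev[OF bal pa ab] by (simp add: delta_def)
  qed
qed

lemma crossing_iff:
  assumes pp: "is_pair_partition p" and K: "K \<in> blocks p" and K': "K' \<in> blocks p" and ne: "K \<noteq> K'"
  shows "crossing p K K' \<longleftrightarrow> odd (cc p K K')"
proof -
  have ip: "is_partition p" using pp by (simp add: is_pair_partition_def)
  obtain a where a: "a \<in> K" using pp_block[OF pp K] by fastforce
  obtain b where b: "K = {a, b}" "a \<noteq> b" using card2[OF pp_block(2)[OF pp K] a] by blast
  obtain c where c: "c \<in> K'" using pp_block[OF pp K'] by fastforce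
  obtain d where d: "K' = {c, d}" "c \<noteq> d" using card2[OF pp_block(2)[OF pp K'] c] by blast
  have dj: "K \<inter> K' = {}" using blocks_disj[OF ip K K' ne] .
  have pts: "a \<in> points p" "b \<in> points p" "c \<in> points p" "d \<in> points p"
    using pp_block(1)[OF pp K] pp_block(1)[OF pp K'] b d by auto
  have dist: "a \<noteq> c" "a \<noteq> d" "b \<noteq> c" "b \<noteq> d" using dj b d by auto
  have ip': "\<And>x y. x \<in> points p \<Longrightarrow> y \<in> points p \<Longrightarrow> x \<noteq> y \<Longrightarrow> pos p x \<noteq> pos p y"
    using inj_pos by (metis inj_on_def)
  have pd: "pos p a \<noteq> pos p b" "pos p a \<noteq> pos p c" "pos p a \<noteq> pos p d"
      "pos p b \<noteq> pos p c" "pos p b \<noteq> pos p d" "pos p c \<noteq> pos p d"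
    using ip' pts dist b(2) d(2) by auto
  have oim: "\<And>x y z. z \<in> points p \<Longrightarrow> z \<in> oi p x y \<longleftrightarrow> cyc_between (pos p x) (pos p y) (pos p z)"
    by (simp add: oi_def)
  have "crossing p K K' \<longleftrightarrow>
     ((cyc_between (pos p a) (pos p b) (pos p c) \<and> cyc_between (pos p b) (pos p a) (pos p d)) \<or>
      (cyc_between (pos p a) (pos p b) (pos p d) \<and> cyc_between (pos p b) (pos p a) (pos p c)))"
  proof
    assume "crossing p K K'"
    then obtain x y z w where h: "x \<in> K" "y \<in> K" "z \<in> K'" "w \<in> K'" "x \<noteq> y" "z \<in> oi p x y" "w \<in> oi p y x"
      unfolding crossing_def by blast
    have "z \<in> points p" "w \<in> points p" using h pts b d by auto
    then have "cyc_between (pos p x) (pos p y) (pos p z)" "cyc_between (pos p y) (pos p x) (pos p w)"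
      using h oim by auto
    then show "(cyc_between (pos p a) (pos p b) (pos p c) \<and> cyc_between (pos p b) (pos p a) (pos p d)) \<or>
      (cyc_between (pos p a) (pos p b) (pos p d) \<and> cyc_between (pos p b) (pos p a) (pos p c))"
      using ex_cross[of x a b y z c d w "pos p"] h b d pd by blast
  next
    assume h: "(cyc_between (pos p a) (pos p b) (pos p c) \<and> cyc_between (pos p b) (pos p a) (pos p d)) \<or>
      (cyc_between (pos p a) (pos p b) (pos p d) \<and> cyc_between (pos p b) (pos p a) (pos p c))"
    show "crossing p K K'"
    proof (cases "cyc_between (pos p a) (pos p b) (pos p c) \<and> cyc_between (pos p b) (pos p a) (pos p d)")
      case True
      then have "c \<in> oi p a b" "d \<in> oi p b a" using oim pts by auto
      then show ?thesis unfolding crossing_def using ne b d by blast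
    next
      case False
      then have "d \<in> oi p a b" "c \<in> oi p b a" using h oim pts by auto
      then show ?thesis unfolding crossing_def using ne b d by blast
    qed
  qed
  also have "\<dots> \<longleftrightarrow> odd (of_bool (pos p a < pos p c) + of_bool (pos p a < pos p d) + of_bool (pos p b < pos p c) + of_bool (pos p b < pos p d) :: nat)"
    using cross_nat pd by blast
  also have "(of_bool (pos p a < pos p c) + of_bool (pos p a < pos p d) + of_bool (pos p b < pos p c) + of_bool (pos p b < pos p d) :: nat) = cc p K K'"
    unfolding cc_def using b d by simp
  finally show ?thesis .
qed

lemma dist_iff:
  assumes g: "good p" and K: "K \<in> blocks p" and K': "K' \<in> blocks p" and ne: "K \<noteq> K'"
    and a: "a \<in> K" and c: "c \<in> K'"
  shows "dist_bl p K K' = nat \<bar>lev p c - lev p a\<bar>"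
proof -
  have pp: "is_pair_partition p" using g by (simp add: good_def)
  have ip: "is_partition p" using pp by (simp add: is_pair_partition_def)
  have bal: "balanced p" using good_balanced g .
  let ?a = "SOME a. a \<in> K" and ?c = "SOME a. a \<in> K'"
  have sa: "?a \<in> K" using a by (metis someI)
  have sc: "?c \<in> K'" using c by (metis someI)
  have la: "lev p ?a = lev p a" using g K sa a unfolding good_def by metis
  have lc: "lev p ?c = lev p c" using g K' sc c unfolding good_def by metis
  have dj: "K \<inter> K' = {}" using blocks_disj[OF ip K K' ne] .
  have "?a \<noteq> ?c" using dj sa sc by auto
  moreover have "?a \<in> points p" "?c \<in> points p" using pp_block(1)[OF pp K] pp_block(1)[OF pp K'] sa sc by auto
  ultimately have "delta p ?a ?c = lev p ?c - lev p ?a" using delta_lev[OF bal] by blast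
  then show ?thesis unfolding dist_bl_def using la lc by simp
qed

lemma I_D_char:
  "p \<in> I_D D \<longleftrightarrow> good p \<and> (\<forall>K\<in>blocks p. \<forall>K'\<in>blocks p. K \<noteq> K' \<longrightarrow> odd (cc p K K') \<longrightarrow>
      (\<forall>a\<in>K. \<forall>c\<in>K'. nat \<bar>lev p c - lev p a\<bar> \<notin> D))"
proof
  assume p: "p \<in> I_D D"
  then have g: "good p" by (simp add: I_D_def S0_iff)
  have pp: "is_pair_partition p" using g by (simp add: good_def)
  show "good p \<and> (\<forall>K\<in>blocks p. \<forall>K'\<in>blocks p. K \<noteq> K' \<longrightarrow> odd (cc p K K') \<longrightarrow>
      (\<forall>a\<in>K. \<forall>c\<in>K'. nat \<bar>lev p c - lev p a\<bar> \<notin> D))"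
  proof (intro conjI g ballI impI)
    fix K K' a c assume K: "K \<in> blocks p" and K': "K' \<in> blocks p" and ne: "K \<noteq> K'"
      and o: "odd (cc p K K')" and a: "a \<in> K" and c: "c \<in> K'"
    have "crossing p K K'" using crossing_iff[OF pp K K' ne] o by simp
    then have "dist_bl p K K' \<notin> D" using p K K' by (auto simp: I_D_def)
    then show "nat \<bar>lev p c - lev p a\<bar> \<notin> D" using dist_iff[OF g K K' ne a c] by simp
  qed
next
  assume h: "good p \<and> (\<forall>K\<in>blocks p. \<forall>K'\<in>blocks p. K \<noteq> K' \<longrightarrow> odd (cc p K K') \<longrightarrow>
      (\<forall>a\<in>K. \<forall>c\<in>K'. nat \<bar>lev p c - lev p a\<bar> \<notin> D))"
  then have g: "good p" by simp
  have pp: "is_pair_partition p" using g by (simp add: good_def)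
  show "p \<in> I_D D" unfolding I_D_def
  proof (intro CollectI conjI ballI impI)
    show "p \<in> S0" using g S0_iff by simp
    fix K K' assume K: "K \<in> blocks p" and K': "K' \<in> blocks p" and cr: "crossing p K K'"
    have ne: "K \<noteq> K'" using cr by (simp add: crossing_def)
    obtain a where a: "a \<in> K" using pp_block[OF pp K] by fastforce
    obtain c where c: "c \<in> K'" using pp_block[OF pp K'] by fastforce
    have "odd (cc p K K')" using crossing_iff[OF pp K K' ne] cr by simp
    then have "nat \<bar>lev p c - lev p a\<bar> \<notin> D" using h K K' ne a c by blast
    then show "dist_bl p K K' \<notin> D" using dist_iff[OF g K K' ne a c] by simp
  qed
qed

lemma swap_swap[simp]: "swap_pt (swap_pt x) = x" by (cases x) auto
lemma inj_swap: "inj swap_pt" by (metis injI swap_swap)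

lemma points_invol: "points (invol p) = swap_pt ` points p"
proof -
  have "points (invol p) \<subseteq> swap_pt ` points p"
  proof
    fix x assume "x \<in> points (invol p)"
    then have "swap_pt x \<in> points p" by (cases x) (auto simp: points_def invol_def)
    then show "x \<in> swap_pt ` points p" by (metis imageI swap_swap)
  qed
  moreover have "swap_pt ` points p \<subseteq> points (invol p)"
    by (auto simp: points_def invol_def)
  ultimately show ?thesis by blast
qed

lemma ncol_invol: "ncol (invol p) (swap_pt x) = opp (ncol p x)"
  by (cases x) (auto simp: invol_def)

lemma lev_invol: "lev (invol p) (swap_pt x) = lev p x"
  by (cases x) (auto simp: invol_def)

lemma pos_invol: "x \<in> points p \<Longrightarrow> pos (invol p) (swap_pt x) = length (cyc p) - 1 - pos p x"
  by (cases x) (auto simp: invol_def points_def length_cyc)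

lemma cc_flip:
  assumes K1: "K1 \<subseteq> points p" and K2: "K2 \<subseteq> points p" and dj: "K1 \<inter> K2 = {}"
  shows "cc p K1 K2 + (\<Sum>u\<in>K1. \<Sum>v\<in>K2. of_bool (pos p v < pos p u)) = card K1 * card K2"
proof -
  have "\<And>u v. u \<in> K1 \<Longrightarrow> v \<in> K2 \<Longrightarrow> of_bool (pos p u < pos p v) + of_bool (pos p v < pos p u) = (1::nat)"
  proof -
    fix u v assume "u \<in> K1" "v \<in> K2"
    then have "pos p u \<noteq> pos p v" using inj_pos[of p] K1 K2 dj by (metis disjoint_iff inj_onD subsetD)
    then show "of_bool (pos p u < pos p v) + of_bool (pos p v < pos p u) = (1::nat)" by auto
  qed
  then have "(\<Sum>u\<in>K1. \<Sum>v\<in>K2. of_bool (pos p u < pos p v) + of_bool (pos p v < pos p u)) = (\<Sum>u\<in>K1. \<Sum>v\<in>K2. (1::nat))"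
    by (intro sum.cong refl) auto
  then show ?thesis unfolding cc_def by (simp add: sum.distrib)
qed

lemma invol_I:
  assumes p: "p \<in> I_D D"
  shows "invol p \<in> I_D D"
proof -
  let ?q = "invol p"
  have ch: "good p \<and> (\<forall>K\<in>blocks p. \<forall>K'\<in>blocks p. K \<noteq> K' \<longrightarrow> odd (cc p K K') \<longrightarrow>
      (\<forall>a\<in>K. \<forall>c\<in>K'. nat \<bar>lev p c - lev p a\<bar> \<notin> D))" using p I_D_char by blast
  then have g: "good p" by simp
  have pp: "is_pair_partition p" using g by (simp add: good_def)
  have ip: "is_partition p" using pp by (simp add: is_pair_partition_def)
  have bq: "blocks ?q = (`) swap_pt ` blocks p" by (simp add: invol_def)
  have pq: "points ?q = swap_pt ` points p" by (rule points_invol)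
  have ppq: "is_pair_partition ?q"
    unfolding is_pair_partition_def is_partition_def
  proof (intro conjI ballI partition_onI)
    show "\<Union>(blocks ?q) = points ?q" using ip unfolding bq pq is_partition_def partition_on_def by auto
    show "{} \<notin> blocks ?q" using ip unfolding bq is_partition_def partition_on_def by auto
    fix K1 K2 assume "K1 \<in> blocks ?q" "K2 \<in> blocks ?q" "K1 \<noteq> K2"
    then obtain L1 L2 where "L1 \<in> blocks p" "L2 \<in> blocks p" "K1 = swap_pt ` L1" "K2 = swap_pt ` L2" "L1 \<noteq> L2"
      unfolding bq by auto
    moreover then have "L1 \<inter> L2 = {}" using blocks_disj[OF ip] by blast
    ultimately show "disjnt K1 K2" using inj_swap unfolding disjnt_def inj_def by (simp add: image_Int[symmetric] inj_swap)
  next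
    fix K assume "K \<in> blocks ?q"
    then obtain L where "L \<in> blocks p" "K = swap_pt ` L" unfolding bq by auto
    then show "card K = 2" using pp_block(2)[OF pp] card_image inj_swap by (metis inj_on_subset subset_UNIV)
  qed
  have gq: "good ?q" unfolding good_def
  proof (rule conjI[OF ppq], intro ballI impI)
    fix K a b assume K: "K \<in> blocks ?q" and a: "a \<in> K" and b: "b \<in> K" and ab: "a \<noteq> b"
    then obtain L where L: "L \<in> blocks p" "K = swap_pt ` L" unfolding bq by auto
    then obtain a' b' where ab': "a = swap_pt a'" "b = swap_pt b'" "a' \<in> L" "b' \<in> L" "a' \<noteq> b'" using a b ab by auto
    have "ncol p a' \<noteq> ncol p b'" "lev p a' = lev p b'" using g L(1) ab'(3,4,5) unfolding good_def by blast+
    then show "ncol ?q a \<noteq> ncol ?q b \<and> lev ?q a = lev ?q b"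
      unfolding ab'(1,2) ncol_invol lev_invol by (metis opp_opp)
  qed
  show ?thesis unfolding I_D_char
  proof (intro conjI gq ballI impI)
    fix K1 K2 a c assume K1: "K1 \<in> blocks ?q" and K2: "K2 \<in> blocks ?q" and ne: "K1 \<noteq> K2"
      and o: "odd (cc ?q K1 K2)" and a: "a \<in> K1" and c: "c \<in> K2"
    obtain L1 where L1: "L1 \<in> blocks p" "K1 = swap_pt ` L1" using K1 unfolding bq by auto
    obtain L2 where L2: "L2 \<in> blocks p" "K2 = swap_pt ` L2" using K2 unfolding bq by auto
    have ne': "L1 \<noteq> L2" using ne L1 L2 by auto
    have s1: "L1 \<subseteq> points p" and s2: "L2 \<subseteq> points p" using pp_block(1)[OF pp] L1 L2 by auto
    have dj: "L1 \<inter> L2 = {}" using blocks_disj[OF ip L1(1) L2(1) ne'] .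
    have c1: "card L1 = 2" and c2: "card L2 = 2" using pp_block(2)[OF pp] L1 L2 by auto
    have "cc ?q K1 K2 = (\<Sum>u\<in>L1. \<Sum>v\<in>L2. of_bool (pos ?q (swap_pt u) < pos ?q (swap_pt v)))"
      unfolding cc_def L1(2) L2(2) using inj_swap
      by (simp add: sum.reindex inj_on_def)
    also have "\<dots> = (\<Sum>u\<in>L1. \<Sum>v\<in>L2. of_bool (pos p v < pos p u))"
    proof (intro sum.cong refl)
      fix u v assume "u \<in> L1" "v \<in> L2"
      then have "u \<in> points p" "v \<in> points p" using s1 s2 by auto
      then have u: "u \<in> points p" and v: "v \<in> points p" by auto
      have "(length (cyc p) - 1 - pos p u < length (cyc p) - 1 - pos p v) = (pos p v < pos p u)"
        using pos_lt[OF u] pos_lt[OF v] by arith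
      then show "of_bool (pos ?q (swap_pt u) < pos ?q (swap_pt v)) = (of_bool (pos p v < pos p u) :: nat)"
        using pos_invol[OF u] pos_invol[OF v] by simp
    qed
    finally have "cc ?q K1 K2 + cc p L1 L2 = 4" using cc_flip[OF s1 s2 dj] c1 c2 by simp
    then have "odd (cc p L1 L2)" using o by presburger
    moreover obtain a' c' where "a = swap_pt a'" "c = swap_pt c'" "a' \<in> L1" "c' \<in> L2" using a c L1 L2 by auto
    ultimately show "nat \<bar>lev ?q c - lev ?q a\<bar> \<notin> D" using ch L1 L2 ne' by (simp add: lev_invol)
  qed
qed

lemma inj_shift: "inj (shift k l)"
proof (rule injI)
  fix x y assume "shift k l x = shift k l y" then show "x = y" by (cases x; cases y) auto
qed

lemma points_tensor: "points (tensor p q) = points p \<union> shift (length (ucol p)) (length (lcol p)) ` points q"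
proof -
  let ?sh = "shift (length (ucol p)) (length (lcol p))"
  have "x \<in> points p \<union> ?sh ` points q" if "x \<in> points (tensor p q)" for x
  proof (cases x)
    case (Up i)
    show ?thesis
    proof (cases "i < length (ucol p)")
      case True then show ?thesis using Up by (simp add: points_def)
    next
      case False
      then have "x = ?sh (Up (i - length (ucol p)))" "Up (i - length (ucol p)) \<in> points q"
        using Up that by (auto simp: points_def tensor_def)
      then show ?thesis by blast
    qed
  next
    case (Lo i)
    show ?thesis
    proof (cases "i < length (lcol p)")
      case True then show ?thesis using Lo by (simp add: points_def)
    next
      case False
      then have "x = ?sh (Lo (i - length (lcol p)))" "Lo (i - length (lcol p)) \<in> points q"
        using Lo that by (auto simp: points_def tensor_def)
      then show ?thesis by blast
    qed
  qed
  moreover have "points p \<union> ?sh ` points q \<subseteq> points (tensor p q)"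
  proof
    fix x assume "x \<in> points p \<union> ?sh ` points q"
    then show "x \<in> points (tensor p q)"
      by (auto simp: points_def tensor_def)
  qed
  ultimately show ?thesis by blast
qed

lemma disj_tensor: "points p \<inter> shift (length (ucol p)) (length (lcol p)) ` points q = {}"
proof -
  have "x \<notin> points p" if "x \<in> shift (length (ucol p)) (length (lcol p)) ` points q" for x
    using that by (auto simp: points_def)
  then show ?thesis by blast
qed

lemma ncol_t_p: "x \<in> points p \<Longrightarrow> ncol (tensor p q) x = ncol p x"
  by (cases x) (auto simp: points_def tensor_def nth_append)

lemma ncol_t_q: "ncol (tensor p q) (shift (length (ucol p)) (length (lcol p)) y) = ncol q y"
  by (cases y) (auto simp: tensor_def nth_append)

lemma lv_append1: "j < length xs \<Longrightarrow> lv (xs @ ys) j = lv xs j"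
  by (simp add: lv_def nth_append)

lemma lv_append2: "lv (xs @ ys) (j + length xs) = cs xs + lv ys j"
  by (simp add: lv_def nth_append)

lemma lev_t_p: "x \<in> points p \<Longrightarrow> lev (tensor p q) x = lev p x"
  by (cases x) (auto simp: points_def tensor_def lv_append1)

lemma lev_t_q: "balanced p \<Longrightarrow> lev (tensor p q) (shift (length (ucol p)) (length (lcol p)) y) = lev q y + cs (ucol p)"
  by (cases y) (auto simp: tensor_def lv_append2 balanced_def)

lemma pos_t_pL: "pos (tensor p q) (Lo j) = j" by simp
lemma pos_t_pU: "i < length (ucol p) \<Longrightarrow> pos (tensor p q) (Up i) = pos p (Up i) + length (cyc q)"
  by (simp add: tensor_def length_cyc)
lemma pos_t_q: "y \<in> points q \<Longrightarrow> pos (tensor p q) (shift (length (ucol p)) (length (lcol p)) y) = pos q y + length (lcol p)"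
  by (cases y) (auto simp: tensor_def points_def)

lemma same_p:
  assumes "x \<in> points p" "y \<in> points p"
  shows "(pos (tensor p q) x < pos (tensor p q) y) = (pos p x < pos p y)"
  using assms by (cases x; cases y) (auto simp: points_def tensor_def length_cyc)

lemma same_q:
  assumes "x \<in> points q" "y \<in> points q"
  shows "(pos (tensor p q) (shift (length (ucol p)) (length (lcol p)) x) < pos (tensor p q) (shift (length (ucol p)) (length (lcol p)) y)) = (pos q x < pos q y)"
  using assms by (simp add: pos_t_q)

fun isLo :: "pt \<Rightarrow> bool" where "isLo (Lo j) = True" | "isLo (Up i) = False"

lemma mix1:
  assumes "x \<in> points p" "y \<in> points q"
  shows "(pos (tensor p q) x < pos (tensor p q) (shift (length (ucol p)) (length (lcol p)) y)) = isLo x"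
  using assms pos_lt[OF assms(2)] by (cases x) (auto simp: pos_t_q points_def tensor_def length_cyc)

lemma mix2:
  assumes "x \<in> points p" "y \<in> points q"
  shows "(pos (tensor p q) (shift (length (ucol p)) (length (lcol p)) y) < pos (tensor p q) x) = (\<not> isLo x)"
  using assms pos_lt[OF assms(2)] by (cases x) (auto simp: pos_t_q points_def tensor_def length_cyc)

lemma sum_const_even:
  assumes "finite L" "card L = 2"
  shows "even (\<Sum>u\<in>K. \<Sum>v\<in>L. (of_bool (P u) :: nat))"
proof -
  have "(\<Sum>u\<in>K. \<Sum>v\<in>L. (of_bool (P u) :: nat)) = (\<Sum>u\<in>K. 2 * of_bool (P u))" using assms by simp
  also have "\<dots> = 2 * (\<Sum>u\<in>K. of_bool (P u))" by (simp add: sum_distrib_left)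
  finally show ?thesis by simp
qed

lemma sum_const_even2:
  assumes "finite K" "card K = 2"
  shows "even (\<Sum>u\<in>K. \<Sum>v\<in>L. (of_bool (P v) :: nat))"
proof -
  have "(\<Sum>u\<in>K. \<Sum>v\<in>L. (of_bool (P v) :: nat)) = card K * (\<Sum>v\<in>L. of_bool (P v))" by simp
  then show ?thesis using assms(2) by simp
qed

lemma tensor_I:
  assumes p: "p \<in> I_D D" and q: "q \<in> I_D D"
  shows "tensor p q \<in> I_D D"
proof -
  let ?t = "tensor p q" and ?sh = "shift (length (ucol p)) (length (lcol p))"
  have chp: "good p \<and> (\<forall>K\<in>blocks p. \<forall>K'\<in>blocks p. K \<noteq> K' \<longrightarrow> odd (cc p K K') \<longrightarrow>
      (\<forall>a\<in>K. \<forall>c\<in>K'. nat \<bar>lev p c - lev p a\<bar> \<notin> D))" using p I_D_char by blast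
  have chq: "good q \<and> (\<forall>K\<in>blocks q. \<forall>K'\<in>blocks q. K \<noteq> K' \<longrightarrow> odd (cc q K K') \<longrightarrow>
      (\<forall>a\<in>K. \<forall>c\<in>K'. nat \<bar>lev q c - lev q a\<bar> \<notin> D))" using q I_D_char by blast
  have gp: "good p" and gq: "good q" using chp chq by auto
  have ppp: "is_pair_partition p" using gp by (simp add: good_def)
  have ppq: "is_pair_partition q" using gq by (simp add: good_def)
  have ipp: "is_partition p" using ppp by (simp add: is_pair_partition_def)
  have ipq: "is_partition q" using ppq by (simp add: is_pair_partition_def)
  have balp: "balanced p" using good_balanced gp .
  have bt: "blocks ?t = blocks p \<union> (`) ?sh ` blocks q" by (simp add: tensor_def)
  have pt: "points ?t = points p \<union> ?sh ` points q" by (rule points_tensor)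
  have dj0: "points p \<inter> ?sh ` points q = {}" by (rule disj_tensor)
  have injsh: "inj ?sh" by (rule inj_shift)
  have Up: "\<Union>(blocks p) = points p" using ipp unfolding is_partition_def partition_on_def by auto
  have Uq: "\<Union>(blocks q) = points q" using ipq unfolding is_partition_def partition_on_def by auto
  have ppt: "is_pair_partition ?t"
    unfolding is_pair_partition_def is_partition_def
  proof (intro conjI ballI partition_onI)
    show "\<Union>(blocks ?t) = points ?t" unfolding bt pt by (simp only: Union_Un_distrib image_Union[symmetric] Up Uq)
    show "{} \<notin> blocks ?t" using ipp ipq unfolding bt is_partition_def partition_on_def by auto
    fix K1 K2 assume K1: "K1 \<in> blocks ?t" and K2: "K2 \<in> blocks ?t" and ne: "K1 \<noteq> K2"
    show "disjnt K1 K2"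
    proof (cases "K1 \<in> blocks p")
      case True
      note T1 = True
      show ?thesis
      proof (cases "K2 \<in> blocks p")
        case True then show ?thesis using T1 blocks_disj[OF ipp] ne by (simp add: disjnt_def)
      next
        case False
        then obtain L2 where "L2 \<in> blocks q" "K2 = ?sh ` L2" using K2 unfolding bt by auto
        then have "K2 \<subseteq> ?sh ` points q" "K1 \<subseteq> points p" using Uq Up T1 by auto
        then show ?thesis using dj0 by (auto simp: disjnt_def)
      qed
    next
      case False
      then obtain L1 where L1: "L1 \<in> blocks q" "K1 = ?sh ` L1" using K1 unfolding bt by auto
      show ?thesis
      proof (cases "K2 \<in> blocks p")
        case True
        then have "K1 \<subseteq> ?sh ` points q" "K2 \<subseteq> points p" using Uq Up L1 by auto
        then show ?thesis using dj0 by (auto simp: disjnt_def)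
      next
        case False
        then obtain L2 where L2: "L2 \<in> blocks q" "K2 = ?sh ` L2" using K2 unfolding bt by auto
        then have "L1 \<noteq> L2" using ne L1 by auto
        then have "L1 \<inter> L2 = {}" using blocks_disj[OF ipq L1(1) L2(1)] by blast
        then show ?thesis unfolding disjnt_def L1(2) L2(2) by (simp add: image_Int[symmetric] injsh)
      qed
    qed
  next
    fix K assume "K \<in> blocks ?t"
    then show "card K = 2" unfolding bt using pp_block(2)[OF ppp] pp_block(2)[OF ppq] injsh
      by (auto simp: card_image inj_on_def inj_def)
  qed
  have gt: "good ?t" unfolding good_def
  proof (rule conjI[OF ppt], intro ballI impI)
    fix K a b assume K: "K \<in> blocks ?t" and a: "a \<in> K" and b: "b \<in> K" and ab: "a \<noteq> b"
    show "ncol ?t a \<noteq> ncol ?t b \<and> lev ?t a = lev ?t b"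
    proof (cases "K \<in> blocks p")
      case True
      then have "a \<in> points p" "b \<in> points p" using a b Up by auto
      moreover have "ncol p a \<noteq> ncol p b" "lev p a = lev p b" using gp True a b ab unfolding good_def by blast+
      ultimately show ?thesis using ncol_t_p lev_t_p by metis
    next
      case False
      then obtain L where L: "L \<in> blocks q" "K = ?sh ` L" using K unfolding bt by auto
      then obtain a' b' where ab': "a = ?sh a'" "b = ?sh b'" "a' \<in> L" "b' \<in> L" "a' \<noteq> b'" using a b ab by auto
      have "ncol q a' \<noteq> ncol q b'" "lev q a' = lev q b'" using gq L(1) ab'(3,4,5) unfolding good_def by blast+
      then show ?thesis unfolding ab'(1,2) ncol_t_q lev_t_q[OF balp] by simp
    qed
  qed
  show ?thesis unfolding I_D_char
  proof (intro conjI gt ballI impI)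
    fix K1 K2 a c assume K1: "K1 \<in> blocks ?t" and K2: "K2 \<in> blocks ?t" and ne: "K1 \<noteq> K2"
      and o: "odd (cc ?t K1 K2)" and a: "a \<in> K1" and c: "c \<in> K2"
    show "nat \<bar>lev ?t c - lev ?t a\<bar> \<notin> D"
    proof (cases "K1 \<in> blocks p")
      case True
      note T1 = True
      have s1: "K1 \<subseteq> points p" using T1 Up by auto
      show ?thesis
      proof (cases "K2 \<in> blocks p")
        case True
        have s2: "K2 \<subseteq> points p" using True Up by auto
        have e: "\<And>u v. u \<in> K1 \<Longrightarrow> v \<in> K2 \<Longrightarrow> (pos ?t u < pos ?t v) = (pos p u < pos p v)"
          using s1 s2 same_p by blast
        have "cc ?t K1 K2 = cc p K1 K2" unfolding cc_def by (intro sum.cong refl) (simp add: e)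
        then have "nat \<bar>lev p c - lev p a\<bar> \<notin> D" using chp T1 True ne o a c by auto
        then show ?thesis using lev_t_p s1 s2 a c by (metis subsetD)
      next
        case False
        then obtain L2 where L2: "L2 \<in> blocks q" "K2 = ?sh ` L2" using K2 unfolding bt by auto
        have s2: "L2 \<subseteq> points q" using L2 Uq by auto
        have "cc ?t K1 K2 = (\<Sum>u\<in>K1. \<Sum>v\<in>L2. of_bool (pos ?t u < pos ?t (?sh v)))"
          unfolding cc_def L2(2) by (simp add: sum.reindex inj_on_def inj_shift[THEN injD])
        also have "\<dots> = (\<Sum>u\<in>K1. \<Sum>v\<in>L2. of_bool (isLo u))"
        proof -
          have e: "\<And>u v. u \<in> K1 \<Longrightarrow> v \<in> L2 \<Longrightarrow> (pos ?t u < pos ?t (?sh v)) = isLo u"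
            using s1 s2 mix1 by blast
          show ?thesis by (intro sum.cong refl) (simp add: e)
        qed
        finally have "even (cc ?t K1 K2)" using sum_const_even[OF pp_block(3,2)[OF ppq L2(1)], of isLo K1] by metis
        then show ?thesis using o by simp
      qed
    next
      case False
      then obtain L1 where L1: "L1 \<in> blocks q" "K1 = ?sh ` L1" using K1 unfolding bt by auto
      have s1: "L1 \<subseteq> points q" using L1 Uq by auto
      show ?thesis
      proof (cases "K2 \<in> blocks p")
        case True
        have s2: "K2 \<subseteq> points p" using True Up by auto
        have "cc ?t K1 K2 = (\<Sum>u\<in>L1. \<Sum>v\<in>K2. of_bool (pos ?t (?sh u) < pos ?t v))"
          unfolding cc_def L1(2) by (simp add: sum.reindex inj_on_def inj_shift[THEN injD])
        also have "\<dots> = (\<Sum>u\<in>L1. \<Sum>v\<in>K2. of_bool (\<not> isLo v))"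
        proof -
          have e: "\<And>u v. u \<in> L1 \<Longrightarrow> v \<in> K2 \<Longrightarrow> (pos ?t (?sh u) < pos ?t v) = (\<not> isLo v)"
            using s1 s2 mix2 by blast
          show ?thesis by (intro sum.cong refl) (simp add: e)
        qed
        finally have "even (cc ?t K1 K2)" using sum_const_even2[OF pp_block(3,2)[OF ppq L1(1)], of "\<lambda>v. \<not> isLo v" K2] by metis
        then show ?thesis using o by simp
      next
        case False
        then obtain L2 where L2: "L2 \<in> blocks q" "K2 = ?sh ` L2" using K2 unfolding bt by auto
        have s2: "L2 \<subseteq> points q" using L2 Uq by auto
        have ne': "L1 \<noteq> L2" using ne L1 L2 by auto
        have "cc ?t K1 K2 = (\<Sum>u\<in>L1. \<Sum>v\<in>L2. of_bool (pos ?t (?sh u) < pos ?t (?sh v)))"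
          unfolding cc_def L1(2) L2(2) by (simp add: sum.reindex inj_on_def inj_shift[THEN injD])
        also have "\<dots> = cc q L1 L2"
        proof -
          have e: "\<And>u v. u \<in> L1 \<Longrightarrow> v \<in> L2 \<Longrightarrow> (pos ?t (?sh u) < pos ?t (?sh v)) = (pos q u < pos q v)"
            using s1 s2 same_q by blast
          show ?thesis unfolding cc_def by (intro sum.cong refl) (simp add: e)
        qed
        finally have "odd (cc q L1 L2)" using o by simp
        moreover obtain a' c' where "a = ?sh a'" "c = ?sh c'" "a' \<in> L1" "c' \<in> L2" using a c L1 L2 by auto
        ultimately show ?thesis using chq L1 L2 ne' by (simp add: lev_t_q[OF balp])
      qed
    qed
  qed
qed

lemma card2_eq: "card e = 2 \<Longrightarrow> u \<in> e \<Longrightarrow> v \<in> e \<Longrightarrow> u \<noteq> v \<Longrightarrow> e = {u, v}"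
  unfolding card_2_iff by auto

lemma bfs_step:
  fixes F :: "'a set set" and S S' :: "'a set"
  assumes fin: "finite F" and c2: "\<forall>e\<in>F. card e = 2" and sub: "S \<subseteq> S'" and fS': "finite S'"
    and new: "\<And>v. v \<in> S' - S \<Longrightarrow> \<exists>e\<in>F. \<exists>u\<in>S. u \<in> e \<and> v \<in> e \<and> e \<subseteq> S'"
  shows "card (S' - S) \<le> card {e\<in>F. e \<subseteq> S'} - card {e\<in>F. e \<subseteq> S}"
proof -
  define g where "g v = (SOME e. e \<in> F \<and> (\<exists>u\<in>S. u \<in> e) \<and> v \<in> e \<and> e \<subseteq> S')" for v
  have g: "g v \<in> F \<and> (\<exists>u\<in>S. u \<in> g v) \<and> v \<in> g v \<and> g v \<subseteq> S'" if "v \<in> S' - S" for v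
  proof -
    have "\<exists>e. e \<in> F \<and> (\<exists>u\<in>S. u \<in> e) \<and> v \<in> e \<and> e \<subseteq> S'" using new[OF that] by blast
    then show ?thesis unfolding g_def by (rule someI_ex)
  qed
  have uniq: "v = v'" if hv: "v \<in> S' - S" and hv': "v' \<in> S' - S" and he: "g v = g v'" for v v'
  proof -
    obtain u where u: "u \<in> S" "u \<in> g v" using g[OF hv] by blast
    have "card (g v) = 2" using g[OF hv] c2 by blast
    then obtain a b where ab: "g v = {a, b}" "a \<noteq> b" by (meson card_2_iff)
    have "v \<in> g v" "v' \<in> g v" using g[OF hv] g[OF hv'] he by auto
    then show ?thesis using ab u hv hv' by auto
  qed
  have inj: "inj_on g (S' - S)" using uniq by (auto simp: inj_on_def)
  have im: "g ` (S' - S) \<subseteq> {e\<in>F. e \<subseteq> S'} - {e\<in>F. e \<subseteq> S}" using g by blast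
  have fE: "finite {e\<in>F. e \<subseteq> S'}" using fin by simp
  have "card (S' - S) = card (g ` (S' - S))" using card_image[OF inj] by simp
  also have "\<dots> \<le> card ({e\<in>F. e \<subseteq> S'} - {e\<in>F. e \<subseteq> S})" using im fE by (intro card_mono) auto
  also have "\<dots> = card {e\<in>F. e \<subseteq> S'} - card {e\<in>F. e \<subseteq> S}"
    using sub fE fin by (intro card_Diff_subset) auto
  finally show ?thesis .
qed

lemma bfs_card:
  fixes F :: "'a set set"
  assumes fin: "finite F" and c2: "\<forall>e\<in>F. card e = 2"
    and R: "R = {(u,v). \<exists>e\<in>F. u \<in> e \<and> v \<in> e}"
  shows "card {y. (x,y) \<in> R\<^sup>*} \<le> card {e\<in>F. e \<subseteq> {y. (x,y) \<in> R\<^sup>*}} + 1"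
proof -
  define S where "S j = {y. \<exists>i\<le>j. (x,y) \<in> R ^^ i}" for j
  have fU: "finite (insert x (\<Union>F))" using fin c2 by (simp add: card_ge_0_finite)
  have inR: "(u, v) \<in> R \<Longrightarrow> v \<in> \<Union>F" for u v using R by auto
  have SsubU: "S j \<subseteq> insert x (\<Union>F)" for j
  proof
    fix y assume "y \<in> S j"
    then obtain i where "(x,y) \<in> R ^^ i" unfolding S_def by blast
    then show "y \<in> insert x (\<Union>F)"
    proof (cases i)
      case 0 then show ?thesis using \<open>(x,y) \<in> R ^^ i\<close> by simp
    next
      case (Suc i')
      then obtain u where "(u, y) \<in> R" using \<open>(x,y) \<in> R ^^ i\<close> by auto
      then show ?thesis using inR by blast
    qed
  qed
  have fS: "finite (S j)" for j using SsubU fU finite_subset by metis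
  have mono: "S j \<subseteq> S (Suc j)" for j unfolding S_def using le_Suc_eq by blast
  have step: "card (S j) \<le> card {e\<in>F. e \<subseteq> S j} + 1" for j
  proof (induction j)
    case 0
    have "S 0 = {x}" unfolding S_def by auto
    then show ?case by simp
  next
    case (Suc j)
    have new: "\<exists>e\<in>F. \<exists>u\<in>S j. u \<in> e \<and> v \<in> e \<and> e \<subseteq> S (Suc j)" if v: "v \<in> S (Suc j) - S j" for v
    proof -
      have "(x, v) \<in> R ^^ Suc j" using v unfolding S_def by (auto simp: le_Suc_eq)
      then obtain u where u: "(x, u) \<in> R ^^ j" "(u, v) \<in> R" by auto
      then obtain e where e: "e \<in> F" "u \<in> e" "v \<in> e" using R by auto
      have uS: "u \<in> S j" using u unfolding S_def by auto
      have uv: "u \<noteq> v" using uS v by auto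
      have "card e = 2" using c2 e(1) by blast
      then have "e = {u, v}" by (rule card2_eq[OF _ e(2) e(3) uv])
      then have "e \<subseteq> S (Suc j)" using uS v mono by auto
      then show ?thesis using e uS by blast
    qed
    have c: "card (S (Suc j) - S j) \<le> card {e\<in>F. e \<subseteq> S (Suc j)} - card {e\<in>F. e \<subseteq> S j}"
      by (rule bfs_step[OF fin c2 mono fS new])
    have "card {e\<in>F. e \<subseteq> S j} \<le> card {e\<in>F. e \<subseteq> S (Suc j)}"
      using mono fin by (intro card_mono) auto
    moreover have "card (S (Suc j)) = card (S j) + card (S (Suc j) - S j)"
      using mono fS by (metis card_Diff_subset card_mono le_add_diff_inverse)
    ultimately show ?case using Suc c by linarith
  qed
  let ?C = "{y. (x,y) \<in> R\<^sup>*}"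
  have fC: "finite ?C"
  proof -
    have "?C \<subseteq> insert x (\<Union>F)"
    proof
      fix y assume "y \<in> ?C"
      then have "(x,y) \<in> R\<^sup>*" by simp
      then show "y \<in> insert x (\<Union>F)" by (induction rule: rtrancl_induct) (auto dest: inR)
    qed
    then show ?thesis using fU finite_subset by blast
  qed
  define ix where "ix y = (SOME i. (x,y) \<in> R ^^ i)" for y
  have ix: "(x,y) \<in> R ^^ ix y" if "y \<in> ?C" for y
    unfolding ix_def using that rtrancl_power by (metis (mono_tags, lifting) mem_Collect_eq someI)
  define J where "J = Max (ix ` ?C)"
  have "?C \<subseteq> S J"
  proof
    fix y assume y: "y \<in> ?C"
    have "ix y \<le> J" unfolding J_def using fC y by auto
    then show "y \<in> S J" unfolding S_def using ix[OF y] by blast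
  qed
  moreover have "S J \<subseteq> ?C" unfolding S_def using relpow_imp_rtrancl by blast
  ultimately have "?C = S J" by blast
  then show ?thesis using step[of J] by simp
qed

fun isT :: "cpt \<Rightarrow> bool" where "isT (T i) = True" | "isT _ = False"
fun isM :: "cpt \<Rightarrow> bool" where "isM (M i) = True" | "isM _ = False"
fun isB :: "cpt \<Rightarrow> bool" where "isB (Bt i) = True" | "isB _ = False"

lemma cpt_cases3: "isT z \<or> isM z \<or> isB z" by (cases z) auto
lemma cpt_excl: "\<not> (isT z \<and> isM z)" "\<not> (isT z \<and> isB z)" "\<not> (isM z \<and> isB z)" by (cases z; simp)+

lemma inj_bot: "inj bot_emb"
proof (rule injI)
  fix x y assume "bot_emb x = bot_emb y" then show "x = y" by (cases x; cases y) auto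
qed

lemma inj_top: "inj top_emb"
proof (rule injI)
  fix x y assume "top_emb x = top_emb y" then show "x = y" by (cases x; cases y) auto
qed

lemma inj_from_outer: "inj_on from_outer (outer_pts p q)"
  by (auto simp: inj_on_def outer_pts_def)

lemma block_sum0:
  assumes g: "good p" and K: "K \<in> blocks p"
  shows "(\<Sum>y\<in>K. col (ncol p y)) = 0"
proof -
  have pp: "is_pair_partition p" using g by (simp add: good_def)
  obtain a where a: "a \<in> K" using pp_block[OF pp K] by fastforce
  obtain b where b: "K = {a, b}" "a \<noteq> b" using card2[OF pp_block(2)[OF pp K] a] by blast
  have bK: "b \<in> K" using b by simp
  have "\<forall>K\<in>blocks p. \<forall>a\<in>K. \<forall>b\<in>K. a \<noteq> b \<longrightarrow> ncol p a \<noteq> ncol p b \<and> lev p a = lev p b"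
    using g unfolding good_def by (rule conjunct2)
  then have "ncol p a \<noteq> ncol p b" using K a bK b(2) by blast
  then show ?thesis using b by (cases "ncol p a"; cases "ncol p b") auto
qed

lemma card_split3:
  assumes "finite C"
  shows "card C = card {z\<in>C. isT z} + card {z\<in>C. isM z} + card {z\<in>C. isB z}"
proof -
  have "C = {z\<in>C. isT z} \<union> {z\<in>C. isM z} \<union> {z\<in>C. isB z}" using cpt_cases3 by blast
  moreover have "card ({z\<in>C. isT z} \<union> {z\<in>C. isM z} \<union> {z\<in>C. isB z}) = card {z\<in>C. isT z} + card {z\<in>C. isM z} + card {z\<in>C. isB z}"
    using assms cpt_excl by (subst card_Un_disjoint; auto)+
  ultimately show ?thesis by simp
qed

definition dsum :: "('a \<Rightarrow> 'a \<Rightarrow> bool) \<Rightarrow> 'a set \<Rightarrow> 'a set \<Rightarrow> nat" where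
  "dsum P X Y = (\<Sum>u\<in>X. \<Sum>v\<in>Y. of_bool (P u v))"

lemma dsum_split:
  assumes "finite X1" "finite X2" "finite Y1" "finite Y2" "X1 \<inter> X2 = {}" "Y1 \<inter> Y2 = {}"
  shows "dsum P (X1 \<union> X2) (Y1 \<union> Y2) = dsum P X1 Y1 + dsum P X1 Y2 + dsum P X2 Y1 + dsum P X2 Y2"
proof -
  have "dsum P (X1 \<union> X2) (Y1 \<union> Y2) = (\<Sum>u\<in>X1 \<union> X2. (\<Sum>v\<in>Y1. of_bool (P u v)) + (\<Sum>v\<in>Y2. of_bool (P u v)))"
    unfolding dsum_def using assms by (intro sum.cong refl sum.union_disjoint) auto
  also have "\<dots> = (\<Sum>u\<in>X1. (\<Sum>v\<in>Y1. of_bool (P u v)) + (\<Sum>v\<in>Y2. of_bool (P u v))) + (\<Sum>u\<in>X2. (\<Sum>v\<in>Y1. of_bool (P u v)) + (\<Sum>v\<in>Y2. of_bool (P u v)))"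
    using assms by (intro sum.union_disjoint) auto
  finally show ?thesis unfolding dsum_def by (simp add: sum.distrib)
qed

lemma dsum_const1: "(\<And>u v. u \<in> X \<Longrightarrow> v \<in> Y \<Longrightarrow> P u v) \<Longrightarrow> dsum P X Y = card X * card Y"
  unfolding dsum_def by simp

lemma dsum_const0: "(\<And>u v. u \<in> X \<Longrightarrow> v \<in> Y \<Longrightarrow> \<not> P u v) \<Longrightarrow> dsum P X Y = 0"
  unfolding dsum_def by simp

lemma dsum_cong: "(\<And>u v. u \<in> X \<Longrightarrow> v \<in> Y \<Longrightarrow> P u v = Q u v) \<Longrightarrow> dsum P X Y = dsum Q X Y"
  unfolding dsum_def by (intro sum.cong refl) simp

lemma dsum_compl:
  assumes "\<And>u v. u \<in> X \<Longrightarrow> v \<in> Y \<Longrightarrow> of_bool (P u v) + of_bool (Q u v) = (1::nat)"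
  shows "dsum P X Y + dsum Q X Y = card X * card Y"
proof -
  have "dsum P X Y + dsum Q X Y = (\<Sum>u\<in>X. \<Sum>v\<in>Y. of_bool (P u v) + of_bool (Q u v))"
    unfolding dsum_def by (simp add: sum.distrib)
  also have "\<dots> = (\<Sum>u\<in>X. \<Sum>v\<in>Y. (1::nat))" using assms by (intro sum.cong refl) auto
  finally show ?thesis by simp
qed

lemma odd_sum_ex: "odd (sum g X) \<Longrightarrow> \<exists>a\<in>X. odd (g a :: nat)"
proof (rule ccontr)
  assume o: "odd (sum g X)" and n: "\<not> (\<exists>a\<in>X. odd (g a))"
  then have "even (sum g X)" by (intro dvd_sum) auto
  then show False using o by simp
qed

lemma arith6:
  fixes C t m b P Q Oo Fc a c :: nat
  assumes "C = t + m + b" "P = m + b" "Q = t + m" "Oo = t + b" "C \<le> Fc + 1" "Fc \<le> a + c" "Oo \<ge> 1"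
    "P = 2 * a" "Q = 2 * c"
  shows "Oo = 2"
proof -
  have le: "Oo \<le> 2" using assms by linarith
  have ev: "Oo + 2 * m = 2 * (a + c)" using assms(2,3,4,8,9) by simp
  then have "even Oo" by (metis dvd_add_left_iff dvd_triv_left)
  then show ?thesis using le assms(7) by (cases Oo) (auto, presburger)
qed

locale cset =
  fixes p q :: ptn
  assumes gp: "good p" and gq: "good q" and mid: "lcol q = ucol p"
begin

definition "Ep = (`) bot_emb ` blocks p"
definition "Eq = (`) top_emb ` blocks q"
definition "F = Ep \<union> Eq"
definition "R = {(u,v). \<exists>e\<in>F. u \<in> e \<and> v \<in> e}"
definition "cls x = {y. (x,y) \<in> R\<^sup>*}"
definition "Vs = {T i | i. i < length (ucol q)} \<union> {M j | j. j < length (ucol p)} \<union> {Bt j | j. j < length (lcol p)}"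

fun nc :: "cpt \<Rightarrow> color" where
  "nc (T i) = ncol q (Up i)" | "nc (M j) = ncol q (Lo j)" | "nc (Bt j) = ncol p (Lo j)"

fun Lv :: "cpt \<Rightarrow> int" where
  "Lv (T i) = lev q (Up i)" | "Lv (M j) = lev q (Lo j)" | "Lv (Bt j) = lev p (Lo j)"

fun pcol :: "cpt \<Rightarrow> int" where
  "pcol (M j) = - col (nc (M j))" | "pcol z = col (nc z)"

lemma ppp: "is_pair_partition p" using gp by (simp add: good_def)
lemma ppq: "is_pair_partition q" using gq by (simp add: good_def)
lemma ipp: "is_partition p" using ppp by (simp add: is_pair_partition_def)
lemma ipq: "is_partition q" using ppq by (simp add: is_pair_partition_def)
lemma Up: "\<Union>(blocks p) = points p" using ipp unfolding is_partition_def partition_on_def by auto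
lemma Uq: "\<Union>(blocks q) = points q" using ipq unfolding is_partition_def partition_on_def by auto

lemma R_eq: "R = comp_rel p q"
proof (intro set_eqI)
  fix w :: "cpt \<times> cpt"
  obtain u v where w: "w = (u, v)" by (cases w)
  have "(u, v) \<in> R \<longleftrightarrow> (\<exists>K\<in>blocks q. u \<in> top_emb ` K \<and> v \<in> top_emb ` K) \<or> (\<exists>K\<in>blocks p. u \<in> bot_emb ` K \<and> v \<in> bot_emb ` K)"
    unfolding R_def F_def Ep_def Eq_def by blast
  also have "\<dots> \<longleftrightarrow> (u, v) \<in> comp_rel p q"
  proof
    assume "(\<exists>K\<in>blocks q. u \<in> top_emb ` K \<and> v \<in> top_emb ` K) \<or> (\<exists>K\<in>blocks p. u \<in> bot_emb ` K \<and> v \<in> bot_emb ` K)"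
    then show "(u, v) \<in> comp_rel p q"
    proof
      assume "\<exists>K\<in>blocks q. u \<in> top_emb ` K \<and> v \<in> top_emb ` K"
      then obtain K x y where "K \<in> blocks q" "x \<in> K" "y \<in> K" "u = top_emb x" "v = top_emb y" by blast
      then show ?thesis unfolding comp_rel_def by blast
    next
      assume "\<exists>K\<in>blocks p. u \<in> bot_emb ` K \<and> v \<in> bot_emb ` K"
      then obtain K x y where "K \<in> blocks p" "x \<in> K" "y \<in> K" "u = bot_emb x" "v = bot_emb y" by blast
      then show ?thesis unfolding comp_rel_def by blast
    qed
  next
    assume "(u, v) \<in> comp_rel p q"
    then show "(\<exists>K\<in>blocks q. u \<in> top_emb ` K \<and> v \<in> top_emb ` K) \<or> (\<exists>K\<in>blocks p. u \<in> bot_emb ` K \<and> v \<in> bot_emb ` K)"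
      unfolding comp_rel_def by blast
  qed
  finally show "w \<in> R \<longleftrightarrow> w \<in> comp_rel p q" using w by simp
qed

lemma R_sym: "(u,v) \<in> R \<Longrightarrow> (v,u) \<in> R" unfolding R_def by blast

lemma Rs_sym: "(u,v) \<in> R\<^sup>* \<Longrightarrow> (v,u) \<in> R\<^sup>*"
proof (induction rule: rtrancl_induct)
  case base then show ?case by simp
next
  case (step y z) then show ?case using R_sym by (meson converse_rtrancl_into_rtrancl)
qed

lemma cls_self: "x \<in> cls x" by (simp add: cls_def)

lemma cls_eq: "y \<in> cls x \<Longrightarrow> cls y = cls x"
  unfolding cls_def using Rs_sym by (auto intro: rtrancl_trans)

lemma cls_disj: "cls x \<noteq> cls y \<Longrightarrow> cls x \<inter> cls y = {}"
  using cls_eq by blast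

lemma bot_pts: "bot_emb ` points p = {z \<in> Vs. \<not> isT z}"
proof -
  have "z \<in> bot_emb ` points p" if "z \<in> Vs" "\<not> isT z" for z
  proof (cases z)
    case (M j) then have "Up j \<in> points p" using that by (auto simp: Vs_def points_def)
    then show ?thesis using M by force
  next
    case (Bt j) then have "Lo j \<in> points p" using that by (auto simp: Vs_def points_def)
    then show ?thesis using Bt by force
  qed (use that in auto)
  moreover have "bot_emb ` points p \<subseteq> {z \<in> Vs. \<not> isT z}"
    by (auto simp: Vs_def points_def)
  ultimately show ?thesis by blast
qed

lemma top_pts: "top_emb ` points q = {z \<in> Vs. \<not> isB z}"
proof -
  have "z \<in> top_emb ` points q" if "z \<in> Vs" "\<not> isB z" for z
  proof (cases z)
    case (M j) then have "Lo j \<in> points q" using that mid by (auto simp: Vs_def points_def)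
    then show ?thesis using M by force
  next
    case (T j) then have "Up j \<in> points q" using that by (auto simp: Vs_def points_def)
    then show ?thesis using T by force
  qed (use that in auto)
  moreover have "top_emb ` points q \<subseteq> {z \<in> Vs. \<not> isB z}"
    using mid by (auto simp: Vs_def points_def)
  ultimately show ?thesis by blast
qed

lemma Ep_sub: "e \<in> Ep \<Longrightarrow> e \<subseteq> {z \<in> Vs. \<not> isT z}"
  unfolding Ep_def using Up bot_pts by blast

lemma Eq_sub: "e \<in> Eq \<Longrightarrow> e \<subseteq> {z \<in> Vs. \<not> isB z}"
  unfolding Eq_def using Uq top_pts by blast

lemma F_sub: "e \<in> F \<Longrightarrow> e \<subseteq> Vs"
  unfolding F_def using Ep_sub Eq_sub by blast

lemma finite_F: "finite F"
  unfolding F_def Ep_def Eq_def using finite_blocks[OF ipp] finite_blocks[OF ipq] by simp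

lemma card_F: "\<forall>e\<in>F. card e = 2"
  unfolding F_def Ep_def Eq_def using pp_block(2)[OF ppp] pp_block(2)[OF ppq] inj_bot inj_top
  by (auto simp: card_image inj_def inj_on_def)

lemma cls_Vs: "x \<in> Vs \<Longrightarrow> cls x \<subseteq> Vs"
proof
  fix y assume x: "x \<in> Vs" and "y \<in> cls x"
  then have "(x,y) \<in> R\<^sup>*" by (simp add: cls_def)
  then show "y \<in> Vs"
  proof (induction rule: rtrancl_induct)
    case base then show ?case using x .
  next
    case (step y z) then show ?case unfolding R_def using F_sub by blast
  qed
qed

lemma finite_Vs: "finite Vs"
proof -
  have "Vs \<subseteq> T ` {..<length (ucol q)} \<union> M ` {..<length (ucol p)} \<union> Bt ` {..<length (lcol p)}"
    unfolding Vs_def by auto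
  then show ?thesis using finite_subset by blast
qed

lemma edge_sub: "z \<in> cls x \<Longrightarrow> e \<in> F \<Longrightarrow> z \<in> e \<Longrightarrow> e \<subseteq> cls x"
proof
  fix w assume z: "z \<in> cls x" and e: "e \<in> F" "z \<in> e" and w: "w \<in> e"
  have "(z, w) \<in> R" unfolding R_def using e w by blast
  then show "w \<in> cls x" using z unfolding cls_def by (auto intro: rtrancl_into_rtrancl)
qed

lemma Ep_disj: "e \<in> Ep \<Longrightarrow> f \<in> Ep \<Longrightarrow> e \<noteq> f \<Longrightarrow> e \<inter> f = {}"
proof -
  assume "e \<in> Ep" "f \<in> Ep" "e \<noteq> f"
  then obtain K L where "K \<in> blocks p" "L \<in> blocks p" "e = bot_emb ` K" "f = bot_emb ` L" "K \<noteq> L"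
    unfolding Ep_def by auto
  moreover then have "K \<inter> L = {}" using blocks_disj[OF ipp] by blast
  ultimately show "e \<inter> f = {}" by (simp add: image_Int[symmetric] inj_bot)
qed

lemma Eq_disj: "e \<in> Eq \<Longrightarrow> f \<in> Eq \<Longrightarrow> e \<noteq> f \<Longrightarrow> e \<inter> f = {}"
proof -
  assume "e \<in> Eq" "f \<in> Eq" "e \<noteq> f"
  then obtain K L where "K \<in> blocks q" "L \<in> blocks q" "e = top_emb ` K" "f = top_emb ` L" "K \<noteq> L"
    unfolding Eq_def by auto
  moreover then have "K \<inter> L = {}" using blocks_disj[OF ipq] by blast
  ultimately show "e \<inter> f = {}" by (simp add: image_Int[symmetric] inj_top)
qed

lemma Ep_cover: "z \<in> Vs \<Longrightarrow> \<not> isT z \<Longrightarrow> \<exists>e\<in>Ep. z \<in> e"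
proof -
  assume "z \<in> Vs" "\<not> isT z"
  then obtain y where y: "y \<in> points p" "z = bot_emb y" using bot_pts by blast
  then obtain K where "K \<in> blocks p" "y \<in> K" using block_of[OF ipp] by blast
  then show ?thesis using y unfolding Ep_def by blast
qed

lemma Eq_cover: "z \<in> Vs \<Longrightarrow> \<not> isB z \<Longrightarrow> \<exists>e\<in>Eq. z \<in> e"
proof -
  assume "z \<in> Vs" "\<not> isB z"
  then obtain y where y: "y \<in> points q" "z = top_emb y" using top_pts by blast
  then obtain K where "K \<in> blocks q" "y \<in> K" using block_of[OF ipq] by blast
  then show ?thesis using y unfolding Eq_def by blast
qed

lemma Lv_bot: "Lv (bot_emb y) = lev p y"
  using mid by (cases y) auto

lemma Lv_top: "Lv (top_emb y) = lev q y"
  by (cases y) auto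

lemma pcol_bot: "pcol (bot_emb y) = col (ncol p y)"
  using mid by (cases y) auto

lemma nc_top: "nc (top_emb y) = ncol q y"
  by (cases y) auto

lemma Lv_edge: "e \<in> F \<Longrightarrow> u \<in> e \<Longrightarrow> v \<in> e \<Longrightarrow> Lv u = Lv v"
proof -
  assume "e \<in> F" "u \<in> e" "v \<in> e"
  then consider (p) K where "K \<in> blocks p" "e = bot_emb ` K" | (q) K where "K \<in> blocks q" "e = top_emb ` K"
    unfolding F_def Ep_def Eq_def by blast
  then show "Lv u = Lv v"
  proof cases
    case p
    then obtain a b where "a \<in> K" "b \<in> K" "u = bot_emb a" "v = bot_emb b" using \<open>u \<in> e\<close> \<open>v \<in> e\<close> by blast
    moreover have "lev p a = lev p b" using gp p(1) \<open>a \<in> K\<close> \<open>b \<in> K\<close> unfolding good_def by (cases "a = b") blast+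
    ultimately show ?thesis by (simp add: Lv_bot)
  next
    case q
    then obtain a b where "a \<in> K" "b \<in> K" "u = top_emb a" "v = top_emb b" using \<open>u \<in> e\<close> \<open>v \<in> e\<close> by blast
    moreover have "lev q a = lev q b" using gq q(1) \<open>a \<in> K\<close> \<open>b \<in> K\<close> unfolding good_def by (cases "a = b") blast+
    ultimately show ?thesis by (simp add: Lv_top)
  qed
qed

lemma Lv_cls: "y \<in> cls x \<Longrightarrow> Lv y = Lv x"
proof -
  assume "y \<in> cls x"
  then have "(x,y) \<in> R\<^sup>*" by (simp add: cls_def)
  then show "Lv y = Lv x"
  proof (induction rule: rtrancl_induct)
    case base then show ?case by simp
  next
    case (step y z)
    then obtain e where "e \<in> F" "y \<in> e" "z \<in> e" unfolding R_def by blast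
    then have "Lv z = Lv y" using Lv_edge by metis
    then show ?case using step by simp
  qed
qed

definition "Cp x = {z \<in> cls x. \<not> isT z}"
definition "Cq x = {z \<in> cls x. \<not> isB z}"

lemma finite_cls: "x \<in> Vs \<Longrightarrow> finite (cls x)"
  using cls_Vs finite_Vs finite_subset by blast

lemma Cp_Union: "x \<in> Vs \<Longrightarrow> Cp x = \<Union>{e\<in>Ep. e \<subseteq> cls x}"
proof
  assume x: "x \<in> Vs"
  show "Cp x \<subseteq> \<Union>{e\<in>Ep. e \<subseteq> cls x}"
  proof
    fix z assume "z \<in> Cp x"
    then have z: "z \<in> cls x" "\<not> isT z" "z \<in> Vs" unfolding Cp_def using cls_Vs[OF x] by auto
    then obtain e where e: "e \<in> Ep" "z \<in> e" using Ep_cover by blast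
    then have "e \<subseteq> cls x" using edge_sub[OF z(1)] by (auto simp: F_def)
    then show "z \<in> \<Union>{e\<in>Ep. e \<subseteq> cls x}" using e by blast
  qed
  show "\<Union>{e\<in>Ep. e \<subseteq> cls x} \<subseteq> Cp x" unfolding Cp_def using Ep_sub by blast
qed

lemma Cq_Union: "x \<in> Vs \<Longrightarrow> Cq x = \<Union>{e\<in>Eq. e \<subseteq> cls x}"
proof
  assume x: "x \<in> Vs"
  show "Cq x \<subseteq> \<Union>{e\<in>Eq. e \<subseteq> cls x}"
  proof
    fix z assume "z \<in> Cq x"
    then have z: "z \<in> cls x" "\<not> isB z" "z \<in> Vs" unfolding Cq_def using cls_Vs[OF x] by auto
    then obtain e where e: "e \<in> Eq" "z \<in> e" using Eq_cover by blast
    then have "e \<subseteq> cls x" using edge_sub[OF z(1)] by (auto simp: F_def)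
    then show "z \<in> \<Union>{e\<in>Eq. e \<subseteq> cls x}" using e by blast
  qed
  show "\<Union>{e\<in>Eq. e \<subseteq> cls x} \<subseteq> Cq x" unfolding Cq_def using Eq_sub by blast
qed

lemma sum_Cp: "x \<in> Vs \<Longrightarrow> (\<Sum>z\<in>Cp x. f z) = (\<Sum>e\<in>{e\<in>Ep. e \<subseteq> cls x}. \<Sum>z\<in>e. f z)"
proof -
  assume x: "x \<in> Vs"
  have fin: "\<forall>e\<in>{e\<in>Ep. e \<subseteq> cls x}. finite e" using finite_cls[OF x] finite_subset by blast
  have dj: "\<forall>e\<in>{e\<in>Ep. e \<subseteq> cls x}. \<forall>f\<in>{e\<in>Ep. e \<subseteq> cls x}. e \<noteq> f \<longrightarrow> e \<inter> f = {}" using Ep_disj by blast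
  show ?thesis unfolding Cp_Union[OF x] using sum.Union_disjoint[OF fin dj] by simp
qed

lemma sum_Cq: "x \<in> Vs \<Longrightarrow> (\<Sum>z\<in>Cq x. f z) = (\<Sum>e\<in>{e\<in>Eq. e \<subseteq> cls x}. \<Sum>z\<in>e. f z)"
proof -
  assume x: "x \<in> Vs"
  have fin: "\<forall>e\<in>{e\<in>Eq. e \<subseteq> cls x}. finite e" using finite_cls[OF x] finite_subset by blast
  have dj: "\<forall>e\<in>{e\<in>Eq. e \<subseteq> cls x}. \<forall>f\<in>{e\<in>Eq. e \<subseteq> cls x}. e \<noteq> f \<longrightarrow> e \<inter> f = {}" using Eq_disj by blast
  show ?thesis unfolding Cq_Union[OF x] using sum.Union_disjoint[OF fin dj] by simp
qed

lemma card_Cp: "x \<in> Vs \<Longrightarrow> card (Cp x) = 2 * card {e\<in>Ep. e \<subseteq> cls x}"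
proof -
  assume x: "x \<in> Vs"
  have "card (Cp x) = (\<Sum>z\<in>Cp x. 1)" by simp
  also have "\<dots> = (\<Sum>e\<in>{e\<in>Ep. e \<subseteq> cls x}. \<Sum>z\<in>e. 1)" by (rule sum_Cp[OF x])
  also have "\<dots> = (\<Sum>e\<in>{e\<in>Ep. e \<subseteq> cls x}. 2)"
    using card_F unfolding F_def by (intro sum.cong refl) simp
  finally show ?thesis by simp
qed

lemma card_Cq: "x \<in> Vs \<Longrightarrow> card (Cq x) = 2 * card {e\<in>Eq. e \<subseteq> cls x}"
proof -
  assume x: "x \<in> Vs"
  have "card (Cq x) = (\<Sum>z\<in>Cq x. 1)" by simp
  also have "\<dots> = (\<Sum>e\<in>{e\<in>Eq. e \<subseteq> cls x}. \<Sum>z\<in>e. 1)" by (rule sum_Cq[OF x])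
  also have "\<dots> = (\<Sum>e\<in>{e\<in>Eq. e \<subseteq> cls x}. 2)"
    using card_F unfolding F_def by (intro sum.cong refl) simp
  finally show ?thesis by simp
qed

lemma O_eq: "outer_pts p q = {z \<in> Vs. \<not> isM z}"
proof -
  have "z \<in> outer_pts p q" if "z \<in> Vs" "\<not> isM z" for z
    using that by (cases z) (auto simp: Vs_def outer_pts_def)
  moreover have "outer_pts p q \<subseteq> {z \<in> Vs. \<not> isM z}" by (auto simp: Vs_def outer_pts_def)
  ultimately show ?thesis by blast
qed

lemma O_Vs: "x \<in> outer_pts p q \<Longrightarrow> x \<in> Vs" using O_eq by blast

lemma outer_card:
  assumes xO: "x \<in> outer_pts p q"
  shows "card (cls x \<inter> outer_pts p q) = 2"
proof -
  have x: "x \<in> Vs" using O_Vs[OF xO] .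
  let ?C = "cls x"
  have fC: "finite ?C" using finite_cls[OF x] .
  have CV: "?C \<subseteq> Vs" using cls_Vs[OF x] .
  let ?cT = "card {z\<in>?C. isT z}" and ?cM = "card {z\<in>?C. isM z}" and ?cB = "card {z\<in>?C. isB z}"
  have c3: "card ?C = ?cT + ?cM + ?cB" by (rule card_split3[OF fC])
  have cp: "card (Cp x) = ?cM + ?cB"
  proof -
    have "card (Cp x) = card {z\<in>Cp x. isT z} + card {z\<in>Cp x. isM z} + card {z\<in>Cp x. isB z}"
      by (rule card_split3) (simp add: Cp_def fC)
    moreover have "{z\<in>Cp x. isT z} = {}" "{z\<in>Cp x. isM z} = {z\<in>?C. isM z}" "{z\<in>Cp x. isB z} = {z\<in>?C. isB z}"
      unfolding Cp_def using cpt_excl by auto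
    ultimately show ?thesis by simp
  qed
  have cq: "card (Cq x) = ?cT + ?cM"
  proof -
    have "card (Cq x) = card {z\<in>Cq x. isT z} + card {z\<in>Cq x. isM z} + card {z\<in>Cq x. isB z}"
      by (rule card_split3) (simp add: Cq_def fC)
    moreover have "{z\<in>Cq x. isT z} = {z\<in>?C. isT z}" "{z\<in>Cq x. isM z} = {z\<in>?C. isM z}" "{z\<in>Cq x. isB z} = {}"
      unfolding Cq_def using cpt_excl by auto
    ultimately show ?thesis by simp
  qed
  have co: "card (?C \<inter> outer_pts p q) = ?cT + ?cB"
  proof -
    have e: "{z\<in>?C \<inter> outer_pts p q. isT z} = {z\<in>?C. isT z}" "{z\<in>?C \<inter> outer_pts p q. isM z} = {}"
        "{z\<in>?C \<inter> outer_pts p q. isB z} = {z\<in>?C. isB z}"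
      unfolding O_eq using CV cpt_excl by auto
    have "card (?C \<inter> outer_pts p q) = card {z\<in>?C \<inter> outer_pts p q. isT z} + card {z\<in>?C \<inter> outer_pts p q. isM z} + card {z\<in>?C \<inter> outer_pts p q. isB z}"
      by (rule card_split3) (simp add: fC)
    then show ?thesis unfolding e by simp
  qed
  have bfs: "card ?C \<le> card {e\<in>F. e \<subseteq> ?C} + 1"
    unfolding cls_def by (rule bfs_card[OF finite_F card_F R_def])
  have "{e\<in>F. e \<subseteq> ?C} = {e\<in>Ep. e \<subseteq> ?C} \<union> {e\<in>Eq. e \<subseteq> ?C}" unfolding F_def by blast
  then have un: "card {e\<in>F. e \<subseteq> ?C} \<le> card {e\<in>Ep. e \<subseteq> ?C} + card {e\<in>Eq. e \<subseteq> ?C}"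
    using card_Un_le by simp
  have "x \<in> ?C \<inter> outer_pts p q" using cls_self xO by blast
  then have ge: "card (?C \<inter> outer_pts p q) \<ge> 1" using fC
    by (metis One_nat_def Suc_leI card_gt_0_iff empty_iff finite_Int)
  have cP: "card (Cp x) = 2 * card {e\<in>Ep. e \<subseteq> ?C}" by (rule card_Cp[OF x])
  have cQ: "card (Cq x) = 2 * card {e\<in>Eq. e \<subseteq> ?C}" by (rule card_Cq[OF x])
  show ?thesis using arith6[OF c3 cp cq co bfs un ge cP cQ] .
qed

lemma outer_two:
  assumes xO: "x \<in> outer_pts p q"
  obtains u v where "cls x \<inter> outer_pts p q = {u, v}" "u \<noteq> v"
  using outer_card[OF xO] by (meson card_2_iff)

lemma outer_col:
  assumes xO: "x \<in> outer_pts p q" and uv: "cls x \<inter> outer_pts p q = {u, v}" "u \<noteq> v"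
  shows "nc u \<noteq> nc v"
proof -
  have x: "x \<in> Vs" using O_Vs[OF xO] .
  let ?C = "cls x"
  have fC: "finite ?C" using finite_cls[OF x] .
  have CV: "?C \<subseteq> Vs" using cls_Vs[OF x] .
  have s1: "(\<Sum>z\<in>Cp x. pcol z) = 0"
  proof -
    have "(\<Sum>z\<in>Cp x. pcol z) = (\<Sum>e\<in>{e\<in>Ep. e \<subseteq> cls x}. \<Sum>z\<in>e. pcol z)" by (rule sum_Cp[OF x])
    also have "\<dots> = 0"
    proof (rule sum.neutral, intro ballI)
      fix e assume "e \<in> {e\<in>Ep. e \<subseteq> cls x}"
      then obtain K where K: "K \<in> blocks p" "e = bot_emb ` K" unfolding Ep_def by blast
      have "(\<Sum>z\<in>e. pcol z) = (\<Sum>y\<in>K. pcol (bot_emb y))" unfolding K(2) using inj_bot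
        by (simp add: sum.reindex inj_on_def inj_def)
      also have "\<dots> = (\<Sum>y\<in>K. col (ncol p y))" by (simp add: pcol_bot)
      also have "\<dots> = 0" by (rule block_sum0[OF gp K(1)])
      finally show "(\<Sum>z\<in>e. pcol z) = 0" .
    qed
    finally show ?thesis .
  qed
  have s2: "(\<Sum>z\<in>Cq x. col (nc z)) = 0"
  proof -
    have "(\<Sum>z\<in>Cq x. col (nc z)) = (\<Sum>e\<in>{e\<in>Eq. e \<subseteq> cls x}. \<Sum>z\<in>e. col (nc z))" by (rule sum_Cq[OF x])
    also have "\<dots> = 0"
    proof (rule sum.neutral, intro ballI)
      fix e assume "e \<in> {e\<in>Eq. e \<subseteq> cls x}"
      then obtain K where K: "K \<in> blocks q" "e = top_emb ` K" unfolding Eq_def by blast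
      have "(\<Sum>z\<in>e. col (nc z)) = (\<Sum>y\<in>K. col (nc (top_emb y)))" unfolding K(2) using inj_top
        by (simp add: sum.reindex inj_on_def inj_def)
      also have "\<dots> = (\<Sum>y\<in>K. col (ncol q y))" by (simp add: nc_top)
      also have "\<dots> = 0" by (rule block_sum0[OF gq K(1)])
      finally show "(\<Sum>z\<in>e. col (nc z)) = 0" .
    qed
    finally show ?thesis .
  qed
  let ?CT = "{z\<in>?C. isT z}" and ?CM = "{z\<in>?C. isM z}" and ?CB = "{z\<in>?C. isB z}"
  have e1: "Cp x = ?CM \<union> ?CB" unfolding Cp_def using cpt_cases3 cpt_excl by blast
  have e2: "Cq x = ?CT \<union> ?CM" unfolding Cq_def using cpt_cases3 cpt_excl by blast
  have e3: "?C \<inter> outer_pts p q = ?CT \<union> ?CB" unfolding O_eq using CV cpt_cases3 cpt_excl by blast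
  have d1: "?CM \<inter> ?CB = {}" "?CT \<inter> ?CM = {}" "?CT \<inter> ?CB = {}" using cpt_excl by blast+
  have a1: "(\<Sum>z\<in>Cp x. pcol z) = (\<Sum>z\<in>?CM. pcol z) + (\<Sum>z\<in>?CB. pcol z)"
    unfolding e1 using fC d1 by (intro sum.union_disjoint) auto
  have a2: "(\<Sum>z\<in>Cq x. col (nc z)) = (\<Sum>z\<in>?CT. col (nc z)) + (\<Sum>z\<in>?CM. col (nc z))"
    unfolding e2 using fC d1 by (intro sum.union_disjoint) auto
  have a3: "(\<Sum>z\<in>?C \<inter> outer_pts p q. col (nc z)) = (\<Sum>z\<in>?CT. col (nc z)) + (\<Sum>z\<in>?CB. col (nc z))"
    unfolding e3 using fC d1 by (intro sum.union_disjoint) auto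
  have m: "(\<Sum>z\<in>?CM. pcol z) = - (\<Sum>z\<in>?CM. col (nc z))"
  proof -
    have "(\<Sum>z\<in>?CM. pcol z) = (\<Sum>z\<in>?CM. - col (nc z))"
    proof (intro sum.cong refl)
      fix z assume "z \<in> ?CM" then show "pcol z = - col (nc z)" by (cases z) auto
    qed
    then show ?thesis by (simp add: sum_negf)
  qed
  have b: "(\<Sum>z\<in>?CB. pcol z) = (\<Sum>z\<in>?CB. col (nc z))"
  proof (intro sum.cong refl)
    fix z assume "z \<in> ?CB" then show "pcol z = col (nc z)" by (cases z) auto
  qed
  have "(\<Sum>z\<in>?C \<inter> outer_pts p q. col (nc z)) = 0" using s1 s2 a1 a2 a3 m b by linarith
  then have "col (nc u) + col (nc v) = 0" using uv by simp
  then show ?thesis by (cases "nc u"; cases "nc v") auto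
qed

fun ppos :: "cpt \<Rightarrow> nat" where
  "ppos (Bt j) = j" | "ppos (M j) = length (lcol p) + (length (ucol p) - 1 - j)" | "ppos (T i) = 0"
fun qpos :: "cpt \<Rightarrow> nat" where
  "qpos (M j) = j" | "qpos (T i) = length (ucol p) + (length (ucol q) - 1 - i)" | "qpos (Bt j) = 0"
fun rpos :: "cpt \<Rightarrow> nat" where
  "rpos (Bt j) = j" | "rpos (T i) = length (lcol p) + (length (ucol q) - 1 - i)" | "rpos (M j) = 0"

lemma ppos_bot: "y \<in> points p \<Longrightarrow> ppos (bot_emb y) = pos p y"
  by (cases y) (auto simp: points_def)
lemma qpos_top: "y \<in> points q \<Longrightarrow> qpos (top_emb y) = pos q y"
  using mid by (cases y) (auto simp: points_def)

lemma Vs_cases: "z \<in> Vs \<Longrightarrow> (\<exists>i. z = T i \<and> i < length (ucol q)) \<or> (\<exists>j. z = M j \<and> j < length (ucol p)) \<or> (\<exists>j. z = Bt j \<and> j < length (lcol p))"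
  unfolding Vs_def by blast

lemma pa: "u \<in> Vs \<Longrightarrow> v \<in> Vs \<Longrightarrow> isM u \<Longrightarrow> isB v \<Longrightarrow> \<not> ppos u < ppos v"
  by (cases u; cases v) (auto simp: Vs_def)
lemma pb: "u \<in> Vs \<Longrightarrow> v \<in> Vs \<Longrightarrow> isB u \<Longrightarrow> isM v \<Longrightarrow> ppos u < ppos v"
  by (cases u; cases v) (auto simp: Vs_def)
lemma pc: "u \<in> Vs \<Longrightarrow> v \<in> Vs \<Longrightarrow> isM u \<Longrightarrow> isM v \<Longrightarrow> u \<noteq> v \<Longrightarrow>
    of_bool (ppos u < ppos v) + of_bool (qpos u < qpos v) = (1::nat)"
  by (cases u; cases v) (auto simp: Vs_def)
lemma pd: "u \<in> Vs \<Longrightarrow> v \<in> Vs \<Longrightarrow> isT u \<Longrightarrow> isM v \<Longrightarrow> \<not> qpos u < qpos v"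
  by (cases u; cases v) (auto simp: Vs_def)
lemma pe: "u \<in> Vs \<Longrightarrow> v \<in> Vs \<Longrightarrow> isM u \<Longrightarrow> isT v \<Longrightarrow> qpos u < qpos v"
  by (cases u; cases v) (auto simp: Vs_def)
lemma pf: "u \<in> Vs \<Longrightarrow> v \<in> Vs \<Longrightarrow> isT u \<Longrightarrow> isB v \<Longrightarrow> \<not> rpos u < rpos v"
  by (cases u; cases v) (auto simp: Vs_def)
lemma pg: "u \<in> Vs \<Longrightarrow> v \<in> Vs \<Longrightarrow> isB u \<Longrightarrow> isT v \<Longrightarrow> rpos u < rpos v"
  by (cases u; cases v) (auto simp: Vs_def)
lemma ph: "isB u \<Longrightarrow> isB v \<Longrightarrow> (rpos u < rpos v) = (ppos u < ppos v)"
  by (cases u; cases v) auto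
lemma pi: "u \<in> Vs \<Longrightarrow> v \<in> Vs \<Longrightarrow> isT u \<Longrightarrow> isT v \<Longrightarrow> (rpos u < rpos v) = (qpos u < qpos v)"
  by (cases u; cases v) (auto simp: Vs_def)

lemma parity:
  assumes x1: "x1 \<in> outer_pts p q" and x2: "x2 \<in> outer_pts p q" and dj: "cls x1 \<inter> cls x2 = {}"
  shows "even (dsum (\<lambda>u v. rpos u < rpos v) (cls x1 \<inter> outer_pts p q) (cls x2 \<inter> outer_pts p q)
       + dsum (\<lambda>u v. ppos u < ppos v) (Cp x1) (Cp x2) + dsum (\<lambda>u v. qpos u < qpos v) (Cq x1) (Cq x2))"
proof -
  have v1: "x1 \<in> Vs" and v2: "x2 \<in> Vs" using O_Vs x1 x2 by auto
  let ?C1 = "cls x1" and ?C2 = "cls x2"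
  have f1: "finite ?C1" and f2: "finite ?C2" using finite_cls v1 v2 by auto
  have V1: "?C1 \<subseteq> Vs" and V2: "?C2 \<subseteq> Vs" using cls_Vs v1 v2 by auto
  define T1 where "T1 = {z\<in>?C1. isT z}"
  define M1 where "M1 = {z\<in>?C1. isM z}"
  define B1 where "B1 = {z\<in>?C1. isB z}"
  define T2 where "T2 = {z\<in>?C2. isT z}"
  define M2 where "M2 = {z\<in>?C2. isM z}"
  define B2 where "B2 = {z\<in>?C2. isB z}"
  have fin: "finite T1" "finite M1" "finite B1" "finite T2" "finite M2" "finite B2"
    unfolding T1_def M1_def B1_def T2_def M2_def B2_def using f1 f2 by auto
  have djs: "T1 \<inter> B1 = {}" "M1 \<inter> B1 = {}" "T1 \<inter> M1 = {}" "T2 \<inter> B2 = {}" "M2 \<inter> B2 = {}" "T2 \<inter> M2 = {}"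
    unfolding T1_def M1_def B1_def T2_def M2_def B2_def using cpt_excl by blast+
  have e1: "?C1 \<inter> outer_pts p q = T1 \<union> B1" "Cp x1 = M1 \<union> B1" "Cq x1 = T1 \<union> M1"
    unfolding T1_def M1_def B1_def O_eq Cp_def Cq_def using V1 cpt_cases3 cpt_excl by blast+
  have e2: "?C2 \<inter> outer_pts p q = T2 \<union> B2" "Cp x2 = M2 \<union> B2" "Cq x2 = T2 \<union> M2"
    unfolding T2_def M2_def B2_def O_eq Cp_def Cq_def using V2 cpt_cases3 cpt_excl by blast+
  have sub: "T1 \<subseteq> Vs" "M1 \<subseteq> Vs" "B1 \<subseteq> Vs" "T2 \<subseteq> Vs" "M2 \<subseteq> Vs" "B2 \<subseteq> Vs"
    unfolding T1_def M1_def B1_def T2_def M2_def B2_def using V1 V2 by auto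
  have isx: "\<And>z. z \<in> T1 \<Longrightarrow> isT z" "\<And>z. z \<in> M1 \<Longrightarrow> isM z" "\<And>z. z \<in> B1 \<Longrightarrow> isB z"
     "\<And>z. z \<in> T2 \<Longrightarrow> isT z" "\<And>z. z \<in> M2 \<Longrightarrow> isM z" "\<And>z. z \<in> B2 \<Longrightarrow> isB z"
    unfolding T1_def M1_def B1_def T2_def M2_def B2_def by auto
  let ?r = "\<lambda>u v. rpos u < rpos v" and ?p = "\<lambda>u v. ppos u < ppos v" and ?q = "\<lambda>u v. qpos u < qpos v"
  have Xr: "dsum ?r (T1 \<union> B1) (T2 \<union> B2) = dsum ?q T1 T2 + card B1 * card T2 + dsum ?p B1 B2"
  proof -
    have "dsum ?r (T1 \<union> B1) (T2 \<union> B2) = dsum ?r T1 T2 + dsum ?r T1 B2 + dsum ?r B1 T2 + dsum ?r B1 B2"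
      using dsum_split fin djs by blast
    moreover have "dsum ?r T1 T2 = dsum ?q T1 T2" using pi sub isx by (intro dsum_cong) blast
    moreover have "dsum ?r T1 B2 = 0" using pf sub isx by (intro dsum_const0) blast
    moreover have "dsum ?r B1 T2 = card B1 * card T2" using pg sub isx by (intro dsum_const1) blast
    moreover have "dsum ?r B1 B2 = dsum ?p B1 B2" using ph isx by (intro dsum_cong) blast
    ultimately show ?thesis by simp
  qed
  have Xp: "dsum ?p (M1 \<union> B1) (M2 \<union> B2) = dsum ?p M1 M2 + card B1 * card M2 + dsum ?p B1 B2"
  proof -
    have "dsum ?p (M1 \<union> B1) (M2 \<union> B2) = dsum ?p M1 M2 + dsum ?p M1 B2 + dsum ?p B1 M2 + dsum ?p B1 B2"
      using dsum_split fin djs by blast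
    moreover have "dsum ?p M1 B2 = 0" using pa sub isx by (intro dsum_const0) blast
    moreover have "dsum ?p B1 M2 = card B1 * card M2" using pb sub isx by (intro dsum_const1) blast
    ultimately show ?thesis by simp
  qed
  have Xq: "dsum ?q (T1 \<union> M1) (T2 \<union> M2) = dsum ?q T1 T2 + card M1 * card T2 + dsum ?q M1 M2"
  proof -
    have "dsum ?q (T1 \<union> M1) (T2 \<union> M2) = dsum ?q T1 T2 + dsum ?q T1 M2 + dsum ?q M1 T2 + dsum ?q M1 M2"
      using dsum_split fin djs by blast
    moreover have "dsum ?q T1 M2 = 0" using pd sub isx by (intro dsum_const0) blast
    moreover have "dsum ?q M1 T2 = card M1 * card T2" using pe sub isx by (intro dsum_const1) blast
    ultimately show ?thesis by simp
  qed
  have MM: "dsum ?p M1 M2 + dsum ?q M1 M2 = card M1 * card M2"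
  proof (rule dsum_compl)
    fix u v assume u: "u \<in> M1" and v: "v \<in> M2"
    have "u \<noteq> v" using u v dj unfolding M1_def M2_def by blast
    then show "of_bool (ppos u < ppos v) + of_bool (qpos u < qpos v) = (1::nat)"
      using pc sub isx u v by blast
  qed
  have cp1: "card M1 + card B1 = 2 * card {e\<in>Ep. e \<subseteq> ?C1}"
    using card_Cp[OF v1] e1(2) fin djs card_Un_disjoint by metis
  have "dsum ?r (T1 \<union> B1) (T2 \<union> B2) + dsum ?p (M1 \<union> B1) (M2 \<union> B2) + dsum ?q (T1 \<union> M1) (T2 \<union> M2)
      = 2 * (dsum ?q T1 T2 + dsum ?p B1 B2) + (card M1 + card B1) * (card M2 + card T2)"
    using Xr Xp Xq MM by (simp add: algebra_simps)
  also have "\<dots> = 2 * (dsum ?q T1 T2 + dsum ?p B1 B2 + card {e\<in>Ep. e \<subseteq> ?C1} * (card M2 + card T2))"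
    using cp1 by (simp add: algebra_simps)
  finally show ?thesis unfolding e1 e2 by simp
qed

lemma dsum_Cp: "x1 \<in> Vs \<Longrightarrow> x2 \<in> Vs \<Longrightarrow>
  dsum P (Cp x1) (Cp x2) = (\<Sum>e\<in>{e\<in>Ep. e \<subseteq> cls x1}. \<Sum>f\<in>{e\<in>Ep. e \<subseteq> cls x2}. dsum P e f)"
proof -
  assume v1: "x1 \<in> Vs" and v2: "x2 \<in> Vs"
  have "dsum P (Cp x1) (Cp x2) = (\<Sum>u\<in>Cp x1. \<Sum>v\<in>Cp x2. of_bool (P u v))" by (simp add: dsum_def)
  also have "\<dots> = (\<Sum>e\<in>{e\<in>Ep. e \<subseteq> cls x1}. \<Sum>u\<in>e. \<Sum>v\<in>Cp x2. of_bool (P u v))" by (rule sum_Cp[OF v1])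
  also have "\<dots> = (\<Sum>e\<in>{e\<in>Ep. e \<subseteq> cls x1}. \<Sum>u\<in>e. \<Sum>f\<in>{e\<in>Ep. e \<subseteq> cls x2}. \<Sum>v\<in>f. of_bool (P u v))"
    by (simp add: sum_Cp[OF v2])
  also have "\<dots> = (\<Sum>e\<in>{e\<in>Ep. e \<subseteq> cls x1}. \<Sum>f\<in>{e\<in>Ep. e \<subseteq> cls x2}. \<Sum>u\<in>e. \<Sum>v\<in>f. of_bool (P u v))"
    by (simp add: sum.swap[of _ _ "{e\<in>Ep. e \<subseteq> cls x2}"])
  finally show ?thesis by (simp add: dsum_def)
qed

lemma dsum_Cq: "x1 \<in> Vs \<Longrightarrow> x2 \<in> Vs \<Longrightarrow>
  dsum P (Cq x1) (Cq x2) = (\<Sum>e\<in>{e\<in>Eq. e \<subseteq> cls x1}. \<Sum>f\<in>{e\<in>Eq. e \<subseteq> cls x2}. dsum P e f)"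
proof -
  assume v1: "x1 \<in> Vs" and v2: "x2 \<in> Vs"
  have "dsum P (Cq x1) (Cq x2) = (\<Sum>u\<in>Cq x1. \<Sum>v\<in>Cq x2. of_bool (P u v))" by (simp add: dsum_def)
  also have "\<dots> = (\<Sum>e\<in>{e\<in>Eq. e \<subseteq> cls x1}. \<Sum>u\<in>e. \<Sum>v\<in>Cq x2. of_bool (P u v))" by (rule sum_Cq[OF v1])
  also have "\<dots> = (\<Sum>e\<in>{e\<in>Eq. e \<subseteq> cls x1}. \<Sum>u\<in>e. \<Sum>f\<in>{e\<in>Eq. e \<subseteq> cls x2}. \<Sum>v\<in>f. of_bool (P u v))"
    by (simp add: sum_Cq[OF v2])
  also have "\<dots> = (\<Sum>e\<in>{e\<in>Eq. e \<subseteq> cls x1}. \<Sum>f\<in>{e\<in>Eq. e \<subseteq> cls x2}. \<Sum>u\<in>e. \<Sum>v\<in>f. of_bool (P u v))"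
    by (simp add: sum.swap[of _ _ "{e\<in>Eq. e \<subseteq> cls x2}"])
  finally show ?thesis by (simp add: dsum_def)
qed

lemma odd_Xp:
  assumes v1: "x1 \<in> Vs" and v2: "x2 \<in> Vs" and dj: "cls x1 \<inter> cls x2 = {}"
    and o: "odd (dsum (\<lambda>u v. ppos u < ppos v) (Cp x1) (Cp x2))"
  shows "\<exists>K\<in>blocks p. \<exists>L\<in>blocks p. K \<noteq> L \<and> odd (cc p K L) \<and> bot_emb ` K \<subseteq> cls x1 \<and> bot_emb ` L \<subseteq> cls x2"
proof -
  obtain e where e: "e \<in> {e\<in>Ep. e \<subseteq> cls x1}" and oe: "odd (\<Sum>f\<in>{e\<in>Ep. e \<subseteq> cls x2}. dsum (\<lambda>u v. ppos u < ppos v) e f)"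
    using odd_sum_ex o unfolding dsum_Cp[OF v1 v2] by blast
  obtain f where f: "f \<in> {e\<in>Ep. e \<subseteq> cls x2}" and of: "odd (dsum (\<lambda>u v. ppos u < ppos v) e f)"
    using odd_sum_ex[OF oe] by blast
  obtain K where K: "K \<in> blocks p" "e = bot_emb ` K" using e unfolding Ep_def by blast
  obtain L where L: "L \<in> blocks p" "f = bot_emb ` L" using f unfolding Ep_def by blast
  have sK: "K \<subseteq> points p" and sL: "L \<subseteq> points p" using pp_block(1)[OF ppp] K L by auto
  have "dsum (\<lambda>u v. ppos u < ppos v) e f = (\<Sum>u\<in>K. \<Sum>v\<in>L. of_bool (ppos (bot_emb u) < ppos (bot_emb v)))"
    unfolding dsum_def K(2) L(2) using inj_bot by (simp add: sum.reindex inj_on_def inj_def)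
  also have "\<dots> = cc p K L" unfolding cc_def
  proof (intro sum.cong refl)
    fix u v assume "u \<in> K" "v \<in> L"
    then have "ppos (bot_emb u) = pos p u" "ppos (bot_emb v) = pos p v" using ppos_bot sK sL by auto
    then show "of_bool (ppos (bot_emb u) < ppos (bot_emb v)) = (of_bool (pos p u < pos p v) :: nat)"
      by simp
  qed
  finally have occ: "odd (cc p K L)" using of by simp
  have "K \<noteq> {}" using pp_block(2)[OF ppp K(1)] by auto
  then have "K \<noteq> L" using e f K L dj by auto
  then show ?thesis using K L e f occ by blast
qed

lemma odd_Xq:
  assumes v1: "x1 \<in> Vs" and v2: "x2 \<in> Vs" and dj: "cls x1 \<inter> cls x2 = {}"
    and o: "odd (dsum (\<lambda>u v. qpos u < qpos v) (Cq x1) (Cq x2))"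
  shows "\<exists>K\<in>blocks q. \<exists>L\<in>blocks q. K \<noteq> L \<and> odd (cc q K L) \<and> top_emb ` K \<subseteq> cls x1 \<and> top_emb ` L \<subseteq> cls x2"
proof -
  obtain e where e: "e \<in> {e\<in>Eq. e \<subseteq> cls x1}" and oe: "odd (\<Sum>f\<in>{e\<in>Eq. e \<subseteq> cls x2}. dsum (\<lambda>u v. qpos u < qpos v) e f)"
    using odd_sum_ex o unfolding dsum_Cq[OF v1 v2] by blast
  obtain f where f: "f \<in> {e\<in>Eq. e \<subseteq> cls x2}" and of: "odd (dsum (\<lambda>u v. qpos u < qpos v) e f)"
    using odd_sum_ex[OF oe] by blast
  obtain K where K: "K \<in> blocks q" "e = top_emb ` K" using e unfolding Eq_def by blast
  obtain L where L: "L \<in> blocks q" "f = top_emb ` L" using f unfolding Eq_def by blast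
  have sK: "K \<subseteq> points q" and sL: "L \<subseteq> points q" using pp_block(1)[OF ppq] K L by auto
  have "dsum (\<lambda>u v. qpos u < qpos v) e f = (\<Sum>u\<in>K. \<Sum>v\<in>L. of_bool (qpos (top_emb u) < qpos (top_emb v)))"
    unfolding dsum_def K(2) L(2) using inj_top by (simp add: sum.reindex inj_on_def inj_def)
  also have "\<dots> = cc q K L" unfolding cc_def
  proof (intro sum.cong refl)
    fix u v assume "u \<in> K" "v \<in> L"
    then have "qpos (top_emb u) = pos q u" "qpos (top_emb v) = pos q v" using qpos_top sK sL by auto
    then show "of_bool (qpos (top_emb u) < qpos (top_emb v)) = (of_bool (pos q u < pos q v) :: nat)"
      by simp
  qed
  finally have occ: "odd (cc q K L)" using of by simp
  have "K \<noteq> {}" using pp_block(2)[OF ppq K(1)] by auto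
  then have "K \<noteq> L" using e f K L dj by auto
  then show ?thesis using K L e f occ by blast
qed

end

lemma comp_I:
  assumes p: "p \<in> I_D D" and q: "q \<in> I_D D" and mid: "lcol q = ucol p"
  shows "comp p q \<in> I_D D"
proof -
  have chp: "good p \<and> (\<forall>K\<in>blocks p. \<forall>K'\<in>blocks p. K \<noteq> K' \<longrightarrow> odd (cc p K K') \<longrightarrow>
      (\<forall>a\<in>K. \<forall>c\<in>K'. nat \<bar>lev p c - lev p a\<bar> \<notin> D))" using p I_D_char by blast
  have chq: "good q \<and> (\<forall>K\<in>blocks q. \<forall>K'\<in>blocks q. K \<noteq> K' \<longrightarrow> odd (cc q K K') \<longrightarrow>
      (\<forall>a\<in>K. \<forall>c\<in>K'. nat \<bar>lev q c - lev q a\<bar> \<notin> D))" using q I_D_char by blast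
  have gp: "good p" and gq: "good q" using chp chq by auto
  interpret cset p q using gp gq mid by unfold_locales
  let ?r = "comp p q" and ?O = "outer_pts p q"
  have br: "blocks ?r = {from_outer ` (cls x \<inter> ?O) | x. x \<in> ?O}"
    unfolding comp_def cls_def R_eq by simp
  have ptr: "points ?r = from_outer ` ?O"
  proof
    show "points ?r \<subseteq> from_outer ` ?O"
    proof
      fix y assume y: "y \<in> points ?r"
      show "y \<in> from_outer ` ?O"
      proof (cases y)
        case (Up i)
        then have "T i \<in> ?O" using y by (auto simp: points_def comp_def outer_pts_def)
        then show ?thesis using Up by force
      next
        case (Lo j)
        then have "Bt j \<in> ?O" using y by (auto simp: points_def comp_def outer_pts_def)
        then show ?thesis using Lo by force
      qed
    qed
    show "from_outer ` ?O \<subseteq> points ?r" by (auto simp: points_def comp_def outer_pts_def)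
  qed
  have injO: "inj_on from_outer ?O" by (rule inj_from_outer)
  have injC: "inj_on from_outer (cls x \<inter> ?O)" for x using inj_on_subset[OF injO] by blast
  have ncr: "ncol ?r (from_outer z) = nc z" if "z \<in> ?O" for z using that by (auto simp: outer_pts_def comp_def)
  have levr: "lev ?r (from_outer z) = Lv z" if "z \<in> ?O" for z using that by (auto simp: outer_pts_def comp_def)
  have posr: "pos ?r (from_outer z) = rpos z" if "z \<in> ?O" for z using that by (auto simp: outer_pts_def comp_def)
  have cardB: "card (from_outer ` (cls x \<inter> ?O)) = 2" if "x \<in> ?O" for x
    using card_image[OF injC] outer_card[OF that] by simp
  have ppr: "is_pair_partition ?r"
    unfolding is_pair_partition_def is_partition_def
  proof (intro conjI ballI partition_onI)
    show "\<Union>(blocks ?r) = points ?r"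
    proof
      show "\<Union>(blocks ?r) \<subseteq> points ?r" unfolding br ptr by blast
      show "points ?r \<subseteq> \<Union>(blocks ?r)"
      proof
        fix y assume "y \<in> points ?r"
        then obtain z where z: "z \<in> ?O" "y = from_outer z" using ptr by blast
        then have "y \<in> from_outer ` (cls z \<inter> ?O)" using cls_self by blast
        then show "y \<in> \<Union>(blocks ?r)" unfolding br using z by blast
      qed
    qed
    show "{} \<notin> blocks ?r" unfolding br using cls_self by blast
    fix K1 K2 assume K1: "K1 \<in> blocks ?r" and K2: "K2 \<in> blocks ?r" and ne: "K1 \<noteq> K2"
    obtain x1 where x1: "x1 \<in> ?O" "K1 = from_outer ` (cls x1 \<inter> ?O)" using K1 unfolding br by blast
    obtain x2 where x2: "x2 \<in> ?O" "K2 = from_outer ` (cls x2 \<inter> ?O)" using K2 unfolding br by blast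
    have "cls x1 \<noteq> cls x2" using ne x1 x2 by auto
    then have "cls x1 \<inter> cls x2 = {}" by (rule cls_disj)
    then have e: "(cls x1 \<inter> ?O) \<inter> (cls x2 \<inter> ?O) = {}" by blast
    have "from_outer ` (cls x1 \<inter> ?O) \<inter> from_outer ` (cls x2 \<inter> ?O) = from_outer ` ((cls x1 \<inter> ?O) \<inter> (cls x2 \<inter> ?O))"
      using inj_on_image_Int[OF injO] by blast
    then show "disjnt K1 K2" unfolding disjnt_def x1(2) x2(2) using e by simp
  next
    fix K assume "K \<in> blocks ?r"
    then obtain x where "x \<in> ?O" "K = from_outer ` (cls x \<inter> ?O)" unfolding br by blast
    then show "card K = 2" using cardB by simp
  qed
  have gr: "good ?r" unfolding good_def
  proof (rule conjI[OF ppr], intro ballI impI)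
    fix K a b assume K: "K \<in> blocks ?r" and a: "a \<in> K" and b: "b \<in> K" and ab: "a \<noteq> b"
    obtain x where x: "x \<in> ?O" "K = from_outer ` (cls x \<inter> ?O)" using K unfolding br by blast
    obtain u where u: "u \<in> cls x \<inter> ?O" "a = from_outer u" using a x by blast
    obtain v where v: "v \<in> cls x \<inter> ?O" "b = from_outer v" using b x by blast
    have uv: "u \<noteq> v" using ab u v by blast
    have "cls x \<inter> ?O = {u, v}" by (rule card2_eq[OF outer_card[OF x(1)] u(1) v(1) uv])
    then have "nc u \<noteq> nc v" using outer_col[OF x(1) _ uv] by blast
    moreover have "Lv u = Lv v" using Lv_cls[of u x] Lv_cls[of v x] u(1) v(1) by simp
    ultimately show "ncol ?r a \<noteq> ncol ?r b \<and> lev ?r a = lev ?r b" using ncr levr u v by simp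
  qed
  show ?thesis unfolding I_D_char
  proof (intro conjI gr ballI impI)
    fix K1 K2 a c assume K1: "K1 \<in> blocks ?r" and K2: "K2 \<in> blocks ?r" and ne: "K1 \<noteq> K2"
      and o: "odd (cc ?r K1 K2)" and a: "a \<in> K1" and c: "c \<in> K2"
    obtain x1 where x1: "x1 \<in> ?O" "K1 = from_outer ` (cls x1 \<inter> ?O)" using K1 unfolding br by blast
    obtain x2 where x2: "x2 \<in> ?O" "K2 = from_outer ` (cls x2 \<inter> ?O)" using K2 unfolding br by blast
    have "cls x1 \<noteq> cls x2" using ne x1 x2 by auto
    then have dj: "cls x1 \<inter> cls x2 = {}" by (rule cls_disj)
    obtain u where u: "u \<in> cls x1 \<inter> ?O" "a = from_outer u" using a x1 by blast
    obtain w where w: "w \<in> cls x2 \<inter> ?O" "c = from_outer w" using c x2 by blast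
    have lra: "lev ?r a = Lv x1" using levr[of u] Lv_cls[of u x1] u by simp
    have lrc: "lev ?r c = Lv x2" using levr[of w] Lv_cls[of w x2] w by simp
    have ccr: "cc ?r K1 K2 = dsum (\<lambda>u v. rpos u < rpos v) (cls x1 \<inter> ?O) (cls x2 \<inter> ?O)"
    proof -
      have "cc ?r K1 K2 = (\<Sum>u\<in>cls x1 \<inter> ?O. \<Sum>v\<in>cls x2 \<inter> ?O. of_bool (pos ?r (from_outer u) < pos ?r (from_outer v)))"
        unfolding cc_def x1(2) x2(2) using injC by (simp add: sum.reindex)
      also have "\<dots> = dsum (\<lambda>u v. rpos u < rpos v) (cls x1 \<inter> ?O) (cls x2 \<inter> ?O)"
        unfolding dsum_def by (intro sum.cong refl) (simp add: posr)
      finally show ?thesis .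
    qed
    have par: "even (dsum (\<lambda>u v. rpos u < rpos v) (cls x1 \<inter> ?O) (cls x2 \<inter> ?O)
       + dsum (\<lambda>u v. ppos u < ppos v) (Cp x1) (Cp x2) + dsum (\<lambda>u v. qpos u < qpos v) (Cq x1) (Cq x2))"
      by (rule parity[OF x1(1) x2(1) dj])
    have "odd (dsum (\<lambda>u v. ppos u < ppos v) (Cp x1) (Cp x2)) \<or> odd (dsum (\<lambda>u v. qpos u < qpos v) (Cq x1) (Cq x2))"
      using par o ccr by auto
    then show "nat \<bar>lev ?r c - lev ?r a\<bar> \<notin> D"
    proof
      assume "odd (dsum (\<lambda>u v. ppos u < ppos v) (Cp x1) (Cp x2))"
      then obtain K L where KL: "K \<in> blocks p" "L \<in> blocks p" "K \<noteq> L" "odd (cc p K L)"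
          "bot_emb ` K \<subseteq> cls x1" "bot_emb ` L \<subseteq> cls x2"
        using odd_Xp[OF O_Vs[OF x1(1)] O_Vs[OF x2(1)] dj] by blast
      obtain a' where a': "a' \<in> K" using pp_block[OF ppp KL(1)] by fastforce
      obtain c' where c': "c' \<in> L" using pp_block[OF ppp KL(2)] by fastforce
      have la: "lev p a' = Lv x1" using Lv_bot[of a'] Lv_cls KL(5) a' by auto
      have lc: "lev p c' = Lv x2" using Lv_bot[of c'] Lv_cls KL(6) c' by auto
      have "nat \<bar>lev p c' - lev p a'\<bar> \<notin> D" using chp KL(1-4) a' c' by blast
      then show ?thesis using la lc lra lrc by simp
    next
      assume "odd (dsum (\<lambda>u v. qpos u < qpos v) (Cq x1) (Cq x2))"
      then obtain K L where KL: "K \<in> blocks q" "L \<in> blocks q" "K \<noteq> L" "odd (cc q K L)"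
          "top_emb ` K \<subseteq> cls x1" "top_emb ` L \<subseteq> cls x2"
        using odd_Xq[OF O_Vs[OF x1(1)] O_Vs[OF x2(1)] dj] by blast
      obtain a' where a': "a' \<in> K" using pp_block[OF ppq KL(1)] by fastforce
      obtain c' where c': "c' \<in> L" using pp_block[OF ppq KL(2)] by fastforce
      have la: "lev q a' = Lv x1" using Lv_top[of a'] Lv_cls KL(5) a' by auto
      have lc: "lev q c' = Lv x2" using Lv_top[of c'] Lv_cls KL(6) c' by auto
      have "nat \<bar>lev q c' - lev q a'\<bar> \<notin> D" using chq KL(1-4) a' c' by blast
      then show ?thesis using la lc lra lrc by simp
    qed
  qed
qed

lemma id_I: "id_part c \<in> I_D D"
proof -
  let ?p = "id_part c"
  have pts: "points ?p = {Up 0, Lo 0}" by (auto simp: points_def id_part_def)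
  have bl: "blocks ?p = {{Up 0, Lo 0}}" by (simp add: id_part_def)
  have pp: "is_pair_partition ?p"
    unfolding is_pair_partition_def is_partition_def pts bl
    by (auto intro: partition_on_space)
  have g: "good ?p" unfolding good_def
  proof (rule conjI[OF pp], intro ballI impI)
    fix K a b assume "K \<in> blocks ?p" "a \<in> K" "b \<in> K" "a \<noteq> b"
    then have "(a = Up 0 \<and> b = Lo 0) \<or> (a = Lo 0 \<and> b = Up 0)" using bl by auto
    then show "ncol ?p a \<noteq> ncol ?p b \<and> lev ?p a = lev ?p b"
      by (cases c) (auto simp: id_part_def)
  qed
  show ?thesis unfolding I_D_char using g bl by auto
qed

lemma pair_I: "c \<noteq> d \<Longrightarrow> pair_part c d \<in> I_D D"
proof -
  assume cd: "c \<noteq> d"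
  let ?p = "pair_part c d"
  have pts: "points ?p = {Lo 0, Lo 1}" by (auto simp: points_def pair_part_def less_2_cases_iff)
  have bl: "blocks ?p = {{Lo 0, Lo 1}}" by (simp add: pair_part_def)
  have pp: "is_pair_partition ?p"
    unfolding is_pair_partition_def is_partition_def pts bl
    by (auto intro: partition_on_space)
  have g: "good ?p" unfolding good_def
  proof (rule conjI[OF pp], intro ballI impI)
    fix K a b assume "K \<in> blocks ?p" "a \<in> K" "b \<in> K" "a \<noteq> b"
    then have "(a = Lo 0 \<and> b = Lo 1) \<or> (a = Lo 1 \<and> b = Lo 0)" using bl by auto
    then show "ncol ?p a \<noteq> ncol ?p b \<and> lev ?p a = lev ?p b"
      using cd by (cases c; cases d) (auto simp: pair_part_def lv_def)
  qed
  show ?thesis unfolding I_D_char using g bl by auto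
qed

theorem theorem1:
  fixes D :: "nat set"
  assumes "subsemigroup D"
  shows "category_of_partitions (I_D D)"
  unfolding category_of_partitions_def
proof (intro conjI ballI impI)
  fix p assume "p \<in> I_D D"
  then have "good p" using I_D_char by blast
  then have "is_pair_partition p" unfolding good_def by (rule conjunct1)
  then show "is_partition p" unfolding is_pair_partition_def by (rule conjunct1)
next
  fix p q assume "p \<in> I_D D" "q \<in> I_D D"
  then show "tensor p q \<in> I_D D" by (rule tensor_I)
next
  fix p q assume "p \<in> I_D D" "q \<in> I_D D" "lcol q = ucol p"
  then show "comp p q \<in> I_D D" by (rule comp_I)
next
  fix p assume "p \<in> I_D D"
  then show "invol p \<in> I_D D" by (rule invol_I)
next
  show "id_part W \<in> I_D D" by (rule id_I)
next
  show "id_part B \<in> I_D D" by (rule id_I)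
next
  show "pair_part W B \<in> I_D D" by (rule pair_I) simp
next
  show "pair_part B W \<in> I_D D" by (rule pair_I) simp
qed

end
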